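(* Let $w$ be a doubly monotone contract, i.e. both $y\mapsto w(y)$ and $y\mapsto y-w(y)$ are non-decreasing on $\mathbb{R}_+$. Then either (1) $V_P(w\mid \{a_0\}) = V_P(w)$, or (2) for every $\epsilon>0$ there exists $x\in\mathbb{R}_+$ with $w(x)>r_0^w$ such that, for the project $a_1=(\delta_x,0)$ (which yields prize $x$ with certainty at zero cost), $V_P(w\mid\{a_0,a_1\}) < V_P(w)+\epsilon$.
   Context: Model. A project is a pair $a=(F,c)$ where $F$ is a probability distribution on $\mathbb{R}_+$ with finite mean and $c\ge 0$ is a cost. An agent has a finite set of projects $\mathcal{A}=\{a_i\}_{i=0}^n$, $a_i=(F_i,c_i)$, whose prizes $y_i\sim F_i$ are drawn independently. The agent searches sequentially with recall (Pandora's box search): at each stage, having observed the prizes of the projects opened so far, he either opens a not-yet-opened project $a_i$, paying $c_i$ and learning $y_i$, or stops and presents a single prize among those observed (he may always present the prize $0$, e.g. without opening any project). A contract is a measurable function $w:\mathbb{R}_+\to\mathbb{R}$ with $w(y)\ge 0$ for all $y$ (limited liability). If the agent presents prize $y$ having opened the set $S$ of projects, the (risk-neutral) agent's payoff is $w(y)-\sum_{i\in S}c_i$ and the (risk-neutral) principal's payoff is $y-w(y)$. Let $\Sigma(w,\mathcal{A})$ denote the set of search strategies maximizing the agent's expected payoff, and (ties broken in the principal's favor) $V_P(w\mid\mathcal{A})=\sup_{\sigma\in\Sigma(w,\mathcal{A})}\mathbb{E}_\sigma[y-w(y)]$, where $\mathbb{E}_\sigma$ is expectation over the presented prize. The principal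 knows only one project $a_0=(F_0,c_0)$ of the agent; her payoff guarantee from $w$ is $V_P(w)=\inf_{\mathcal{A}\supseteq\{a_0\}}V_P(w\mid\mathcal{A})$, the infimum over all finite sets of projects containing $a_0$. The $w$-induced index of $a_0$, $r_0^w$, is the smallest solution $r$ of $c_0=\int [w(y)-r]^+\,dF_0(y)$. $\delta_x$ denotes the Dirac mass at $x$. *)

theory Defs
  imports "HOL-Probability.Probability"
begin

text \<open>A project: a prize distribution on the reals (concentrated on [0,inf), finite mean)
  together with a cost.\<close>
type_synonym project = "real measure \<times> real"

definition valid_project :: "project \<Rightarrow> bool" where
  "valid_project a \<longleftrightarrow> prob_space (fst a) \<and> sets (fst a) = sets borel
     \<and> (AE y in fst a. 0 \<le> y) \<and> integrable (fst a) (\<lambda>y. y) \<and> 0 \<le> snd a"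

definition contract :: "(real \<Rightarrow> real) \<Rightarrow> bool" where
  "contract w \<longleftrightarrow> w \<in> borel_measurable borel \<and> (\<forall>y\<ge>0. 0 \<le> w y)"

definition doubly_monotone :: "(real \<Rightarrow> real) \<Rightarrow> bool" where
  "doubly_monotone w \<longleftrightarrow> mono_on {0..} w \<and> mono_on {0..} (\<lambda>y. y - w y)"

text \<open>Search with recall. A history is the list of (project index, observed prize)
  in the order of opening. A (pure) strategy maps histories to actions.\<close>
datatype action = Open nat | Present real
type_synonym history = "(nat \<times> real) list"
type_synonym strategy = "history \<Rightarrow> action"

fun run :: "strategy \<Rightarrow> (nat \<Rightarrow> real) \<Rightarrow> nat \<Rightarrow> history \<Rightarrow> history \<times> real" where
  "run \<sigma> y 0 h = (h, 0)"
| "run \<sigma> y (Suc k) h = (case \<sigma> h of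
       Open i \<Rightarrow> run \<sigma> y k (h @ [(i, y i)])
     | Present p \<Rightarrow> (h, p))"

definition valid_strategy :: "nat \<Rightarrow> strategy \<Rightarrow> bool" where
  "valid_strategy n \<sigma> \<longleftrightarrow> (\<forall>h.
      (\<forall>i. \<sigma> h = Open i \<longrightarrow> i \<le> n \<and> i \<notin> fst ` set h) \<and>
      (\<forall>p. \<sigma> h = Present p \<longrightarrow> p = 0 \<or> p \<in> snd ` set h))"

definition outcome :: "nat \<Rightarrow> strategy \<Rightarrow> (nat \<Rightarrow> real) \<Rightarrow> history \<times> real" where
  "outcome n \<sigma> y = run \<sigma> y (n + 2) []"

definition presented :: "nat \<Rightarrow> strategy \<Rightarrow> (nat \<Rightarrow> real) \<Rightarrow> real" where
  "presented n \<sigma> y = snd (outcome n \<sigma> y)"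

definition opened :: "nat \<Rightarrow> strategy \<Rightarrow> (nat \<Rightarrow> real) \<Rightarrow> nat set" where
  "opened n \<sigma> y = fst ` set (fst (outcome n \<sigma> y))"

definition prizes :: "nat \<Rightarrow> (nat \<Rightarrow> project) \<Rightarrow> (nat \<Rightarrow> real) measure" where
  "prizes n a = PiM {0..n} (\<lambda>i. fst (a i))"

definition admissible :: "nat \<Rightarrow> (nat \<Rightarrow> project) \<Rightarrow> strategy \<Rightarrow> bool" where
  "admissible n a \<sigma> \<longleftrightarrow> valid_strategy n \<sigma>
     \<and> presented n \<sigma> \<in> borel_measurable (prizes n a)
     \<and> opened n \<sigma> \<in> measurable (prizes n a) (count_space UNIV)"

definition agent_value :: "(real \<Rightarrow> real) \<Rightarrow> nat \<Rightarrow> (nat \<Rightarrow> project) \<Rightarrow> strategy \<Rightarrow> real" where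
  "agent_value w n a \<sigma> = (\<integral>y. w (presented n \<sigma> y) - (\<Sum>i\<in>opened n \<sigma> y. snd (a i)) \<partial>prizes n a)"

definition principal_value :: "(real \<Rightarrow> real) \<Rightarrow> nat \<Rightarrow> (nat \<Rightarrow> project) \<Rightarrow> strategy \<Rightarrow> real" where
  "principal_value w n a \<sigma> = (\<integral>y. presented n \<sigma> y - w (presented n \<sigma> y) \<partial>prizes n a)"

definition opt_strats :: "(real \<Rightarrow> real) \<Rightarrow> nat \<Rightarrow> (nat \<Rightarrow> project) \<Rightarrow> strategy set" where
  "opt_strats w n a = {\<sigma>. admissible n a \<sigma> \<and>
      (\<forall>\<tau>. admissible n a \<tau> \<longrightarrow> agent_value w n a \<tau> \<le> agent_value w n a \<sigma>)}"

text \<open>V_P(w | A) for A = {a 0, ..., a n}, ties broken in the principal's favour.\<close>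
definition VP_cond :: "(real \<Rightarrow> real) \<Rightarrow> nat \<Rightarrow> (nat \<Rightarrow> project) \<Rightarrow> ereal" where
  "VP_cond w n a = (SUP \<sigma>\<in>opt_strats w n a. ereal (principal_value w n a \<sigma>))"

definition VP :: "(real \<Rightarrow> real) \<Rightarrow> project \<Rightarrow> ereal" where
  "VP w a0 = (INF na\<in>{(n, a). a 0 = a0 \<and> (\<forall>i\<le>n. valid_project (a i))}.
                 VP_cond w (fst na) (snd na))"

text \<open>The w-induced index: smallest r with c0 = E[(w(y) - r)^+]; +infinity if none.\<close>
definition r_index :: "(real \<Rightarrow> real) \<Rightarrow> project \<Rightarrow> ereal" where
  "r_index w a0 = Inf {ereal r | r.
      ennreal (snd a0) = (\<integral>\<^sup>+ y. ennreal (w y - r) \<partial>fst a0)}"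

end

theory Submission
  imports Defs
begin



lemma split_insert:
  fixes M :: "nat \<Rightarrow> real measure" and f :: "(nat \<Rightarrow> real) \<Rightarrow> real"
  assumes M: "\<And>j. prob_space (M j)" and J: "finite J" "i \<notin> J"
    and f: "integrable (PiM (insert i J) M) f"
  shows "AE t in M i. integrable (PiM J M) (\<lambda>y. f (y(i:=t)))"
    and "integrable (M i) (\<lambda>t. \<integral>y. f (y(i:=t)) \<partial>PiM J M)"
    and "integral\<^sup>L (PiM (insert i J) M) f = (\<integral>t. (\<integral>y. f (y(i:=t)) \<partial>PiM J M) \<partial>M i)"
proof -
  interpret product_prob_space M by (simp add: product_prob_space_def product_prob_space_axioms_def M product_sigma_finite_def prob_space_imp_sigma_finite)
  interpret P: pair_sigma_finite "PiM J M" "M i"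
    by (intro pair_sigma_finite.intro prob_space_imp_sigma_finite prob_space_PiM M)
  have fb[measurable]: "f \<in> borel_measurable (PiM (insert i J) M)" using f by auto
  have hm: "(\<lambda>(y,t). f (y(i:=t))) \<in> borel_measurable (PiM J M \<Otimes>\<^sub>M M i)"
    by measurable
  have hm2: "(\<lambda>(y,t). ennreal (norm (f (y(i:=t))))) \<in> borel_measurable (PiM J M \<Otimes>\<^sub>M M i)"
    by measurable
  have "(\<integral>\<^sup>+ x. ennreal (norm ((\<lambda>(y,t). f (y(i:=t))) x)) \<partial>(PiM J M \<Otimes>\<^sub>M M i))
      = (\<integral>\<^sup>+ y. \<integral>\<^sup>+ t. ennreal (norm (f (y(i:=t)))) \<partial>M i \<partial>PiM J M)"
    using sigma_finite_measure.nn_integral_fst[OF prob_space_imp_sigma_finite[OF M] hm2] by (simp add: case_prod_beta')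
  also have "\<dots> = (\<integral>\<^sup>+ x. ennreal (norm (f x)) \<partial>PiM (insert i J) M)"
    by (rule product_nn_integral_insert[symmetric]) (use J in auto)
  also have "\<dots> < \<infinity>" using f unfolding integrable_iff_bounded by simp
  finally have hint: "integrable (PiM J M \<Otimes>\<^sub>M M i) (\<lambda>(y,t). f (y(i:=t)))"
    unfolding integrable_iff_bounded using hm by simp
  show "AE t in M i. integrable (PiM J M) (\<lambda>y. f (y(i:=t)))"
    using P.AE_integrable_snd[of "\<lambda>y t. f (y(i:=t))"] hint by simp
  show "integrable (M i) (\<lambda>t. \<integral>y. f (y(i:=t)) \<partial>PiM J M)"
    using P.integrable_snd[of "\<lambda>y t. f (y(i:=t))"] hint by simp
  have "(\<integral>t. (\<integral>y. f (y(i:=t)) \<partial>PiM J M) \<partial>M i) = (\<integral>y. (\<integral>t. f (y(i:=t)) \<partial>M i) \<partial>PiM J M)"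
    using P.Fubini_integral[of "\<lambda>y t. f (y(i:=t))"] hint by simp
  also have "\<dots> = integral\<^sup>L (PiM (insert i J) M) f"
    by (rule product_integral_insert[symmetric]) (use J f in auto)
  finally show "integral\<^sup>L (PiM (insert i J) M) f = (\<integral>t. (\<integral>y. f (y(i:=t)) \<partial>PiM J M) \<partial>M i)" by simp
qed



fun mh :: "(real \<Rightarrow> real) \<Rightarrow> history \<Rightarrow> real" where
  "mh w [] = w 0"
| "mh w ((i,v)#h) = max (w v) (mh w h)"

fun best :: "(real \<Rightarrow> real) \<Rightarrow> history \<Rightarrow> real" where
  "best w [] = 0"
| "best w ((i,v)#h) = (if w (best w h) < w v \<or> (w (best w h) = w v \<and> best w h < v) then v else best w h)"

lemma mh_append: "mh w (h @ [(i,v)]) = max (mh w h) (w v)"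
proof (induction h)
  case (Cons a h) then show ?case by (cases a) (auto simp: max_def)
qed simp

lemma mh_ge: "q \<in> insert 0 (snd ` set h) \<Longrightarrow> w q \<le> mh w h"
proof (induction h)
  case (Cons a h)
  obtain i v where a: "a = (i,v)" by (cases a)
  show ?case using Cons unfolding a by (cases "q = v") (auto simp: max_def)
qed simp

lemma best_in: "best w h \<in> insert 0 (snd ` set h)"
proof (induction h)
  case (Cons a h) then show ?case by (cases a) (auto simp: max_def)
qed simp

lemma w_best: "w (best w h) = mh w h"
proof (induction h)
  case (Cons a h) then show ?case by (cases a) (auto simp: max_def)
qed simp

lemma best_max: "q \<in> insert 0 (snd ` set h) \<Longrightarrow> w q = mh w h \<Longrightarrow> q \<le> best w h"
proof (induction h arbitrary: q)
  case Nil then show ?case by simp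
next
  case (Cons a h)
  obtain i v where a: "a = (i,v)" by (cases a)
  note 2 = Cons[unfolded a]
  have wb: "w (best w h) = mh w h" by (rule w_best)
  have ge: "\<And>q. q \<in> insert 0 (snd ` set h) \<Longrightarrow> w q \<le> mh w h" by (rule mh_ge)
  show ?case
  proof (cases "q = v")
    case True then show ?thesis using 2(3) wb unfolding a by auto
  next
    case False
    then have q: "q \<in> insert 0 (snd ` set h)" using 2(2) by auto
    from ge[OF q] 2(3) wb 2(1)[OF q] show ?thesis unfolding a
      by (auto simp: max_def split: if_splits)
  qed
qed

lemma run_prefix: "\<exists>h'. fst (run \<tau> y k h) = h @ h'"
proof (induction \<tau> y k h rule: run.induct)
  case (2 \<sigma> y k h)
  show ?case
  proof (cases "\<sigma> h")
    case (Open i)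
    then obtain h' where "fst (run \<sigma> y k (h @ [(i, y i)])) = (h @ [(i, y i)]) @ h'" using 2 by blast
    then show ?thesis using Open by auto
  qed simp
qed simp

lemma run_vals:
  assumes "valid_strategy n \<tau>"
  shows "(j,v) \<in> set (fst (run \<tau> y k h)) \<Longrightarrow> (j,v) \<in> set h \<or> (j \<le> n \<and> j \<notin> fst ` set h \<and> v = y j)"
proof (induction k arbitrary: h)
  case 0 then show ?case by simp
next
  case (Suc k)
  show ?case
  proof (cases "\<tau> h")
    case (Open i)
    have "(j,v) \<in> set (h @ [(i, y i)]) \<or> (j \<le> n \<and> j \<notin> fst ` set (h @ [(i, y i)]) \<and> v = y j)"
      using Suc.IH[of "h @ [(i, y i)]"] Suc.prems Open by simp
    moreover have "i \<le> n \<and> i \<notin> fst ` set h" using assms Open unfolding valid_strategy_def by blast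
    ultimately show ?thesis by auto
  next
    case (Present p) then show ?thesis using Suc by auto
  qed
qed

lemma run_pres:
  assumes "valid_strategy n \<tau>"
  shows "snd (run \<tau> y k h) \<in> insert 0 (snd ` set (fst (run \<tau> y k h)))"
proof (induction k arbitrary: h)
  case 0 then show ?case by simp
next
  case (Suc k)
  show ?case
  proof (cases "\<tau> h")
    case (Present p)
    then have "p = 0 \<or> p \<in> snd ` set h" using assms unfolding valid_strategy_def by blast
    then show ?thesis using Present by auto
  qed (use Suc in auto)
qed

lemma run_cong:
  assumes "valid_strategy n \<tau>"
  shows "(\<And>j. j \<le> n \<Longrightarrow> j \<notin> fst ` set h \<Longrightarrow> y j = z j) \<Longrightarrow> run \<tau> y k h = run \<tau> z k h"
proof (induction k arbitrary: h)
  case 0 then show ?case by simp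
next
  case (Suc k)
  show ?case
  proof (cases "\<tau> h")
    case (Open i)
    have i: "i \<le> n \<and> i \<notin> fst ` set h" using assms Open unfolding valid_strategy_def by blast
    then have "y i = z i" using Suc.prems by auto
    moreover have "run \<tau> y k (h @ [(i, z i)]) = run \<tau> z k (h @ [(i, z i)])"
      by (rule Suc.IH) (use Suc.prems in auto)
    ultimately show ?thesis using Open by simp
  qed simp
qed

lemma run_fuel:
  assumes "valid_strategy n \<tau>"
  shows "fst ` set h \<subseteq> {0..n} \<Longrightarrow> card ({0..n} - fst ` set h) < k \<Longrightarrow>
    \<tau> (fst (run \<tau> y k h)) = Present (snd (run \<tau> y k h))"
proof (induction k arbitrary: h)
  case 0 then show ?case by simp
next
  case (Suc k)
  show ?case
  proof (cases "\<tau> h")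
    case (Open i)
    have i: "i \<le> n \<and> i \<notin> fst ` set h" using assms Open unfolding valid_strategy_def by blast
    have "{0..n} - fst ` set (h @ [(i, y i)]) = ({0..n} - fst ` set h) - {i}" by auto
    moreover have "card (({0..n} - fst ` set h) - {i}) = card ({0..n} - fst ` set h) - 1"
      using i by (subst card_Diff_singleton) auto
    moreover have "card ({0..n} - fst ` set h) > 0" using i
      by (subst card_gt_0_iff) auto
    ultimately have "\<tau> (fst (run \<tau> y k (h @ [(i, y i)]))) = Present (snd (run \<tau> y k (h @ [(i, y i)])))"
      using Suc.prems i by (intro Suc.IH) auto
    then show ?thesis using Open by simp
  qed simp
qed

lemma run_mem_indep:
  assumes "valid_strategy n \<tau>"
  shows "j \<notin> fst ` set h \<Longrightarrow> (\<And>l. l \<noteq> j \<Longrightarrow> y l = z l) \<Longrightarrow>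
    (j \<in> fst ` set (fst (run \<tau> y k h))) = (j \<in> fst ` set (fst (run \<tau> z k h)))"
proof (induction k arbitrary: h)
  case 0 then show ?case by simp
next
  case (Suc k)
  show ?case
  proof (cases "\<tau> h")
    case (Open i)
    show ?thesis
    proof (cases "i = j")
      case True
      have "j \<in> fst ` set (fst (run \<tau> u k (h @ [(j, u j)])))" for u
        using run_prefix[of \<tau> u k "h @ [(j, u j)]"] by force
      then show ?thesis using Open True by simp
    next
      case False
      then have "y i = z i" using Suc.prems by auto
      moreover have "(j \<in> fst ` set (fst (run \<tau> y k (h @ [(i, z i)])))) = (j \<in> fst ` set (fst (run \<tau> z k (h @ [(i, z i)]))))"
        by (rule Suc.IH) (use Suc.prems False in auto)
      ultimately show ?thesis using Open by simp
    qed
  qed simp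
qed




definition monolip :: "(real \<Rightarrow> real) \<Rightarrow> bool" where
  "monolip f \<longleftrightarrow> (\<forall>x y. x \<le> y \<longrightarrow> f x \<le> f y \<and> f y \<le> f x + (y - x))"

lemma monolip_abs: "monolip f \<Longrightarrow> \<bar>f x - f y\<bar> \<le> \<bar>x - y\<bar>"
proof (cases "x \<le> y")
  case True
  assume "monolip f"
  then have "f x \<le> f y" "f y \<le> f x + (y - x)" using True unfolding monolip_def by auto
  then show ?thesis using True by linarith
next
  case False
  assume "monolip f"
  then have "f y \<le> f x" "f x \<le> f y + (x - y)" using False unfolding monolip_def by auto
  then show ?thesis using False by linarith
qed

lemma monolip_cont: "monolip f \<Longrightarrow> continuous_on UNIV f"
proof -
  assume "monolip f"
  then have "1-lipschitz_on UNIV f"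
    by (intro lipschitz_onI) (auto simp: dist_real_def monolip_abs)
  then show ?thesis by (rule lipschitz_on_continuous_on)
qed

lemma monolip_meas: "monolip f \<Longrightarrow> f \<in> borel_measurable borel"
  by (intro borel_measurable_continuous_onI monolip_cont)

lemma monolip_integrable:
  assumes f: "monolip f" and F: "prob_space F" and w: "integrable F w"
  shows "integrable F (\<lambda>t. f (max m (w t)))"
proof -
  have I1: "integrable F (\<lambda>t. \<bar>f m\<bar> + \<bar>w t\<bar> + \<bar>m\<bar>)"
    using w F by (intro Bochner_Integration.integrable_add) (auto intro: finite_measure.integrable_const prob_space.finite_measure)
  have wm: "w \<in> borel_measurable F" using w by auto
  have I2: "(\<lambda>t. f (max m (w t))) \<in> borel_measurable F"
    using measurable_compose[OF _ monolip_meas[OF f], of "\<lambda>t. max m (w t)" F] wm by measurable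
  have I3: "AE t in F. norm (f (max m (w t))) \<le> norm (\<bar>f m\<bar> + \<bar>w t\<bar> + \<bar>m\<bar>)"
  proof (intro AE_I2)
    fix t
    have "f m \<le> f (max m (w t))" "f (max m (w t)) \<le> f m + (max m (w t) - m)"
      using f unfolding monolip_def by auto
    then show "norm (f (max m (w t))) \<le> norm (\<bar>f m\<bar> + \<bar>w t\<bar> + \<bar>m\<bar>)" by auto
  qed
  show ?thesis by (rule Bochner_Integration.integrable_bound[OF I1 I2 I3])
qed

lemma monolip_max:
  assumes "monolip f" "m \<le> m'"
  shows "f (max m x) \<le> f (max m' x)" "f (max m' x) \<le> f (max m x) + (m' - m)"
proof -
  have le: "max m x \<le> max m' x" using assms(2) by simp
  then show "f (max m x) \<le> f (max m' x)" using assms(1) unfolding monolip_def by blast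
  have "f (max m' x) \<le> f (max m x) + (max m' x - max m x)" using assms(1) le unfolding monolip_def by blast
  also have "\<dots> \<le> f (max m x) + (m' - m)" using assms(2) by (simp add: max_def)
  finally show "f (max m' x) \<le> f (max m x) + (m' - m)" .
qed

lemma Max_insert_mono:
  fixes C C' :: "nat \<Rightarrow> real"
  assumes "finite R" "m \<le> m'" "\<And>i. i \<in> R \<Longrightarrow> C i \<le> C' i"
  shows "Max (insert m (C ` R)) \<le> Max (insert m' (C' ` R))"
  using assms by (subst Max_le_iff) (auto simp: Max_ge_iff intro: order_trans)

lemma Max_insert_lip:
  fixes C C' :: "nat \<Rightarrow> real"
  assumes "finite R" "m' \<le> m + d" "\<And>i. i \<in> R \<Longrightarrow> C' i \<le> C i + d"
  shows "Max (insert m' (C' ` R)) \<le> Max (insert m (C ` R)) + d"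
proof -
  have "Max (insert m' (C' ` R)) - d \<le> Max (insert m (C ` R))"
  proof -
    have "\<forall>x \<in> insert m' (C' ` R). x - d \<le> Max (insert m (C ` R))"
    proof
      fix x assume "x \<in> insert m' (C' ` R)"
      then show "x - d \<le> Max (insert m (C ` R))"
      proof
        assume "x = m'"
        then have "x - d \<le> m" using assms by simp
        also have "m \<le> Max (insert m (C ` R))" using assms by (intro Max_ge) auto
        finally show ?thesis .
      next
        assume "x \<in> C' ` R"
        then obtain i where i: "i \<in> R" "x = C' i" by auto
        then have "x - d \<le> C i" using assms by force
        also have "C i \<le> Max (insert m (C ` R))" using assms i by (intro Max_ge) auto
        finally show ?thesis .
      qed
    qed
    moreover have "Max (insert m' (C' ` R)) \<in> insert m' (C' ` R)"
      using assms by (intro Max_in) auto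
    ultimately show ?thesis by blast
  qed
  then show ?thesis by simp
qed

fun Uk :: "(real \<Rightarrow> real) \<Rightarrow> (nat \<Rightarrow> real measure) \<Rightarrow> (nat \<Rightarrow> real) \<Rightarrow> nat \<Rightarrow> nat set \<Rightarrow> real \<Rightarrow> real" where
  "Uk w F c 0 R m = m"
| "Uk w F c (Suc k) R m = Max (insert m ((\<lambda>i. (\<integral>t. Uk w F c k (R - {i}) (max m (w t)) \<partial>F i) - c i) ` R))"

lemma Uk_props:
  assumes F: "\<And>i. prob_space (F i)" and wi: "\<And>i. integrable (F i) w"
  shows "finite R \<Longrightarrow> monolip (Uk w F c k R) \<and> (\<forall>m. m \<le> Uk w F c k R m)"
proof (induction k arbitrary: R)
  case 0 then show ?case by (simp add: monolip_def)
next
  case (Suc k)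
  have IH: "\<And>i. monolip (Uk w F c k (R - {i}))" "\<And>i m. m \<le> Uk w F c k (R - {i}) m"
    using Suc by auto
  have int: "\<And>i m. integrable (F i) (\<lambda>t. Uk w F c k (R - {i}) (max m (w t)))"
    using monolip_integrable[OF IH(1) F wi] by blast
  have C: "(\<integral>t. Uk w F c k (R - {i}) (max m (w t)) \<partial>F i) - c i \<le> (\<integral>t. Uk w F c k (R - {i}) (max m' (w t)) \<partial>F i) - c i
      \<and> (\<integral>t. Uk w F c k (R - {i}) (max m' (w t)) \<partial>F i) - c i \<le> ((\<integral>t. Uk w F c k (R - {i}) (max m (w t)) \<partial>F i) - c i) + (m' - m)"
    if "m \<le> m'" for i m m'
  proof
    show "(\<integral>t. Uk w F c k (R - {i}) (max m (w t)) \<partial>F i) - c i \<le> (\<integral>t. Uk w F c k (R - {i}) (max m' (w t)) \<partial>F i) - c i"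
      using monolip_max(1)[OF IH(1)[of i] that] by (auto intro!: integral_mono int)
    interpret prob_space "F i" by (rule F)
    have "(\<integral>t. Uk w F c k (R - {i}) (max m' (w t)) \<partial>F i) \<le> (\<integral>t. Uk w F c k (R - {i}) (max m (w t)) + (m' - m) \<partial>F i)"
      using monolip_max(2)[OF IH(1)[of i] that] int by (intro integral_mono) auto
    also have "\<dots> = (\<integral>t. Uk w F c k (R - {i}) (max m (w t)) \<partial>F i) + (m' - m)"
      using int F[THEN prob_space.prob_space] by (subst Bochner_Integration.integral_add) auto
    finally show "(\<integral>t. Uk w F c k (R - {i}) (max m' (w t)) \<partial>F i) - c i \<le> ((\<integral>t. Uk w F c k (R - {i}) (max m (w t)) \<partial>F i) - c i) + (m' - m)"
      by simp
  qed
  have "monolip (Uk w F c (Suc k) R)"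
    unfolding monolip_def Uk.simps
  proof (intro allI impI conjI)
    fix x y :: real assume "x \<le> y"
    then show "Max (insert x ((\<lambda>i. (\<integral>t. Uk w F c k (R - {i}) (max x (w t)) \<partial>F i) - c i) ` R))
      \<le> Max (insert y ((\<lambda>i. (\<integral>t. Uk w F c k (R - {i}) (max y (w t)) \<partial>F i) - c i) ` R))"
      using C Suc.prems by (intro Max_insert_mono) auto
    show "Max (insert y ((\<lambda>i. (\<integral>t. Uk w F c k (R - {i}) (max y (w t)) \<partial>F i) - c i) ` R))
      \<le> Max (insert x ((\<lambda>i. (\<integral>t. Uk w F c k (R - {i}) (max x (w t)) \<partial>F i) - c i) ` R)) + (y - x)"
      using C \<open>x \<le> y\<close> Suc.prems by (intro Max_insert_lip) auto
  qed
  moreover have "\<forall>m. m \<le> Uk w F c (Suc k) R m"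
    using Suc.prems by (auto simp: Max_ge_iff)
  ultimately show ?case by blast
qed

definition U :: "(real \<Rightarrow> real) \<Rightarrow> (nat \<Rightarrow> real measure) \<Rightarrow> (nat \<Rightarrow> real) \<Rightarrow> nat set \<Rightarrow> real \<Rightarrow> real" where
  "U w F c R m = Uk w F c (card R) R m"

definition contv :: "(real \<Rightarrow> real) \<Rightarrow> (nat \<Rightarrow> real measure) \<Rightarrow> (nat \<Rightarrow> real) \<Rightarrow> nat set \<Rightarrow> real \<Rightarrow> nat \<Rightarrow> real" where
  "contv w F c R m i = (\<integral>t. U w F c (R - {i}) (max m (w t)) \<partial>F i) - c i"

lemma U_rec: "finite R \<Longrightarrow> U w F c R m = Max (insert m (contv w F c R m ` R))"
proof (cases "R = {}")
  case True then show ?thesis by (simp add: U_def)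
next
  case False
  assume fin: "finite R"
  then obtain k where k: "card R = Suc k" using False by (cases "card R") auto
  have "\<And>i. i \<in> R \<Longrightarrow> card (R - {i}) = k" using k fin by (simp add: card_Diff_singleton)
  then show ?thesis unfolding U_def k Uk.simps contv_def
    by (intro arg_cong[where f=Max] arg_cong[where f="insert m"] image_cong) (auto simp: U_def)
qed

lemma U_props:
  assumes F: "\<And>i. prob_space (F i)" and wi: "\<And>i. integrable (F i) w" and R: "finite R"
  shows "monolip (U w F c R)" "m \<le> U w F c R m"
  using Uk_props[OF F wi R] unfolding U_def[abs_def] by auto

lemma U_integrable:
  assumes F: "\<And>i. prob_space (F i)" and wi: "\<And>i. integrable (F i) w" and R: "finite R"
  shows "integrable (F j) (\<lambda>t. U w F c R (max m (w t)))"
  using monolip_integrable[OF U_props(1)[OF F wi R] F wi] .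

lemma contv_monolip:
  assumes F: "\<And>i. prob_space (F i)" and wi: "\<And>i. integrable (F i) w" and R: "finite R"
  shows "monolip (\<lambda>m. contv w F c R m i)"
proof -
  have IH: "monolip (U w F c (R - {i}))" using U_props[OF F wi] R by auto
  have int: "\<And>m. integrable (F i) (\<lambda>t. U w F c (R - {i}) (max m (w t)))"
    using U_integrable[OF F wi, where R="R - {i}" and j=i] R by auto
  interpret prob_space "F i" by (rule F)
  show ?thesis unfolding monolip_def contv_def
  proof (intro allI impI conjI)
    fix m m' :: real assume that: "m \<le> m'"
    show "(\<integral>t. U w F c (R - {i}) (max m (w t)) \<partial>F i) - c i \<le> (\<integral>t. U w F c (R - {i}) (max m' (w t)) \<partial>F i) - c i"
      using monolip_max(1)[OF IH that] by (auto intro!: integral_mono int)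
    have "(\<integral>t. U w F c (R - {i}) (max m' (w t)) \<partial>F i) \<le> (\<integral>t. U w F c (R - {i}) (max m (w t)) + (m' - m) \<partial>F i)"
      using monolip_max(2)[OF IH that] int by (intro integral_mono) auto
    also have "\<dots> = (\<integral>t. U w F c (R - {i}) (max m (w t)) \<partial>F i) + (m' - m)"
      using int F[THEN prob_space.prob_space] by (subst Bochner_Integration.integral_add) auto
    finally show "(\<integral>t. U w F c (R - {i}) (max m' (w t)) \<partial>F i) - c i \<le> ((\<integral>t. U w F c (R - {i}) (max m (w t)) \<partial>F i) - c i) + (m' - m)"
      by simp
  qed
qed





lemma ind_append: "fst ` set (h @ [(i,t)]) = insert i (fst ` set h)" by auto

lemma run_split:
  assumes "valid_strategy n \<tau>" "\<tau> h = Open i"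
  shows "run \<tau> (y(i:=t)) (Suc k) h = run \<tau> y k (h @ [(i,t)])"
proof -
  have "run \<tau> (y(i:=t)) (Suc k) h = run \<tau> (y(i:=t)) k (h @ [(i,t)])" using assms(2) by simp
  also have "\<dots> = run \<tau> y k (h @ [(i,t)])" by (rule run_cong[OF assms(1)]) auto
  finally show ?thesis .
qed

lemma split_run:
  fixes \<Phi> :: "history \<times> real \<Rightarrow> real"
  assumes F: "\<And>j. prob_space (F j)" and v: "valid_strategy n \<tau>" and o: "\<tau> h = Open i"
    and int: "integrable (PiM ({0..n} - fst ` set h) F) (\<lambda>y. \<Phi> (run \<tau> y (Suc k) h))"
  shows "i \<in> {0..n} - fst ` set h"
    and "AE t in F i. integrable (PiM ({0..n} - fst ` set h - {i}) F) (\<lambda>y. \<Phi> (run \<tau> y k (h @ [(i,t)])))"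
    and "integrable (F i) (\<lambda>t. \<integral>y. \<Phi> (run \<tau> y k (h @ [(i,t)])) \<partial>PiM ({0..n} - fst ` set h - {i}) F)"
    and "(\<integral>y. \<Phi> (run \<tau> y (Suc k) h) \<partial>PiM ({0..n} - fst ` set h) F) =
         (\<integral>t. (\<integral>y. \<Phi> (run \<tau> y k (h @ [(i,t)])) \<partial>PiM ({0..n} - fst ` set h - {i}) F) \<partial>F i)"
proof -
  have i: "i \<le> n \<and> i \<notin> fst ` set h" using v o unfolding valid_strategy_def by blast
  then show "i \<in> {0..n} - fst ` set h" by auto
  define R where "R = {0..n} - fst ` set h"
  have R: "R = insert i (R - {i})" using i unfolding R_def by auto
  have fin: "finite (R - {i})" unfolding R_def by auto
  have int': "integrable (PiM (insert i (R - {i})) F) (\<lambda>y. \<Phi> (run \<tau> y (Suc k) h))"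
    by (subst R[symmetric]) (use int in \<open>simp add: R_def\<close>)
  note S = split_insert[OF F fin _ int']
  have eq: "\<And>y t. \<Phi> (run \<tau> (y(i:=t)) (Suc k) h) = \<Phi> (run \<tau> y k (h @ [(i,t)]))"
    using run_split[OF v o] by simp
  show "AE t in F i. integrable (PiM ({0..n} - fst ` set h - {i}) F) (\<lambda>y. \<Phi> (run \<tau> y k (h @ [(i,t)])))"
    using S(1) eq unfolding R_def by simp
  show "integrable (F i) (\<lambda>t. \<integral>y. \<Phi> (run \<tau> y k (h @ [(i,t)])) \<partial>PiM ({0..n} - fst ` set h - {i}) F)"
    using S(2) eq unfolding R_def by simp
  have "(\<integral>y. \<Phi> (run \<tau> y (Suc k) h) \<partial>PiM R F) = (\<integral>y. \<Phi> (run \<tau> y (Suc k) h) \<partial>PiM (insert i (R - {i})) F)"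
    by (subst R[symmetric]) simp
  also have "\<dots> = (\<integral>t. (\<integral>y. \<Phi> (run \<tau> y k (h @ [(i,t)])) \<partial>PiM (R - {i}) F) \<partial>F i)"
    using S(3) eq by simp
  finally show "(\<integral>y. \<Phi> (run \<tau> y (Suc k) h) \<partial>PiM ({0..n} - fst ` set h) F) =
         (\<integral>t. (\<integral>y. \<Phi> (run \<tau> y k (h @ [(i,t)])) \<partial>PiM ({0..n} - fst ` set h - {i}) F) \<partial>F i)"
    unfolding R_def .
qed

definition apay :: "(real \<Rightarrow> real) \<Rightarrow> (nat \<Rightarrow> real) \<Rightarrow> history \<times> real \<Rightarrow> real" where
  "apay w c r = w (snd r) - (\<Sum>j\<in>fst ` set (fst r). c j)"

lemma card_step:
  fixes h :: history
  assumes "i \<in> {0..n} - fst ` set h" "card ({0..n} - fst ` set h) < Suc k"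
  shows "card ({0..n} - fst ` set (h @ [(i,t)])) < k"
proof -
  have "{0..n} - fst ` set (h @ [(i,t)]) = ({0..n} - fst ` set h) - {i}" by auto
  moreover have "card (({0..n} - fst ` set h) - {i}) = card ({0..n} - fst ` set h) - 1"
    using assms by (subst card_Diff_singleton) auto
  moreover have "card ({0..n} - fst ` set h) > 0" using assms(1) by (subst card_gt_0_iff) auto
  ultimately show ?thesis using assms(2) by simp
qed

lemma diff_append: "{0..(n::nat)} - fst ` set (h @ [(i,t)]) = {0..n} - fst ` set h - {i}" by auto

lemma sum_append:
  assumes "i \<notin> fst ` set h"
  shows "(\<Sum>j\<in>fst ` set (h @ [(i,t)]). c j) = (\<Sum>j\<in>fst ` set h. c j) + c i"
  using assms by (simp add: ind_append add.commute)

lemma value_upper: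
  assumes F: "\<And>j. prob_space (F j)" and wi: "\<And>j. integrable (F j) w" and v: "valid_strategy n \<tau>"
  shows "fst ` set h \<subseteq> {0..n} \<Longrightarrow> card ({0..n} - fst ` set h) < k \<Longrightarrow>
    integrable (PiM ({0..n} - fst ` set h) F) (\<lambda>y. apay w c (run \<tau> y k h)) \<Longrightarrow>
    (\<integral>y. apay w c (run \<tau> y k h) \<partial>PiM ({0..n} - fst ` set h) F)
      \<le> U w F c ({0..n} - fst ` set h) (mh w h) - (\<Sum>j\<in>fst ` set h. c j)"
proof (induction k arbitrary: h)
  case 0 then show ?case by simp
next
  case (Suc k)
  define R where "R = {0..n} - fst ` set h"
  have finR: "finite R" unfolding R_def by auto
  interpret P: prob_space "PiM R F" by (intro prob_space_PiM F)
  show ?case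
  proof (cases "\<tau> h")
    case (Present p)
    have p: "p \<in> insert 0 (snd ` set h)" using v Present unfolding valid_strategy_def by auto
    have "(\<integral>y. apay w c (run \<tau> y (Suc k) h) \<partial>PiM R F) = w p - (\<Sum>j\<in>fst ` set h. c j)"
      using Present by (simp add: apay_def P.prob_space)
    also have "w p \<le> mh w h" by (rule mh_ge[OF p])
    also have "mh w h \<le> U w F c R (mh w h)" using U_props(2)[OF F wi finR] .
    finally show ?thesis unfolding R_def by simp
  next
    case (Open i)
    note S = split_run[OF F v Open Suc.prems(3)]
    have iR: "i \<in> R" using S(1) unfolding R_def .
    have inh: "i \<notin> fst ` set h" using iR unfolding R_def by auto
    let ?m = "mh w h"
    let ?C = "(\<Sum>j\<in>fst ` set h. c j)"
    have AEb: "AE t in F i. (\<integral>y. apay w c (run \<tau> y k (h @ [(i,t)])) \<partial>PiM (R - {i}) F)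
        \<le> U w F c (R - {i}) (max ?m (w t)) - (?C + c i)"
      using S(2)
    proof eventually_elim
      case (elim t)
      have "(\<integral>y. apay w c (run \<tau> y k (h @ [(i,t)])) \<partial>PiM ({0..n} - fst ` set (h @ [(i,t)])) F)
         \<le> U w F c ({0..n} - fst ` set (h @ [(i,t)])) (mh w (h @ [(i,t)])) - (\<Sum>j\<in>fst ` set (h @ [(i,t)]). c j)"
      proof (rule Suc.IH)
        show "fst ` set (h @ [(i, t)]) \<subseteq> {0..n}" using Suc.prems(1) S(1) by auto
        show "card ({0..n} - fst ` set (h @ [(i, t)])) < k" by (rule card_step[OF S(1) Suc.prems(2)])
        show "integrable (PiM ({0..n} - fst ` set (h @ [(i, t)])) F) (\<lambda>y. apay w c (run \<tau> y k (h @ [(i, t)])))"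
          using elim by (simp only: diff_append)
      qed
      then show ?case unfolding diff_append mh_append sum_append[OF inh] R_def by simp
    qed
    have intU0: "integrable (F i) (\<lambda>t. U w F c (R - {i}) (max ?m (w t)))"
      by (rule U_integrable[OF F wi]) (use finR in auto)
    have intU: "integrable (F i) (\<lambda>t. U w F c (R - {i}) (max ?m (w t)) - (?C + c i))"
      by (intro Bochner_Integration.integrable_diff intU0 finite_measure.integrable_const prob_space.finite_measure F)
    have "(\<integral>y. apay w c (run \<tau> y (Suc k) h) \<partial>PiM R F)
        = (\<integral>t. (\<integral>y. apay w c (run \<tau> y k (h @ [(i,t)])) \<partial>PiM (R - {i}) F) \<partial>F i)"
      using S(4) unfolding R_def .
    also have "\<dots> \<le> (\<integral>t. U w F c (R - {i}) (max ?m (w t)) - (?C + c i) \<partial>F i)"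
      using S(3) intU AEb unfolding R_def by (intro integral_mono_AE) auto
    also have "\<dots> = contv w F c R ?m i - ?C"
      unfolding contv_def using intU0 F[THEN prob_space.prob_space]
      by (subst Bochner_Integration.integral_diff) (auto intro: finite_measure.integrable_const prob_space.finite_measure F)
    also have "contv w F c R ?m i \<le> U w F c R ?m"
      unfolding U_rec[OF finR] using finR iR by (intro Max_ge) auto
    finally show ?thesis unfolding R_def by simp
  qed
qed


definition sstar :: "(real \<Rightarrow> real) \<Rightarrow> (nat \<Rightarrow> real measure) \<Rightarrow> (nat \<Rightarrow> real) \<Rightarrow> nat \<Rightarrow> strategy" where
  "sstar w F c n h = (let R = {0..n} - fst ` set h; m = mh w h in
     if R \<noteq> {} \<and> m \<le> Max (contv w F c R m ` R)
     then Open (LEAST i. i \<in> R \<and> contv w F c R m i = Max (contv w F c R m ` R))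
     else Present (best w h))"

lemma sstar_open:
  assumes "sstar w F c n h = Open i"
  shows "i \<in> {0..n} - fst ` set h"
    and "U w F c ({0..n} - fst ` set h) (mh w h) = contv w F c ({0..n} - fst ` set h) (mh w h) i"
proof -
  define R where "R = {0..n} - fst ` set h"
  define m where "m = mh w h"
  have fin: "finite R" unfolding R_def by auto
  have cond: "R \<noteq> {} \<and> m \<le> Max (contv w F c R m ` R)"
    using assms unfolding sstar_def R_def m_def Let_def by (auto split: if_splits)
  then have i: "i = (LEAST i. i \<in> R \<and> contv w F c R m i = Max (contv w F c R m ` R))"
    using assms unfolding sstar_def R_def m_def Let_def by auto
  have "Max (contv w F c R m ` R) \<in> contv w F c R m ` R" by (rule Max_in) (use fin cond in auto)
  then have ex: "\<exists>i. i \<in> R \<and> contv w F c R m i = Max (contv w F c R m ` R)" by force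
  have P: "i \<in> R \<and> contv w F c R m i = Max (contv w F c R m ` R)"
    unfolding i by (rule LeastI_ex[OF ex])
  then show "i \<in> {0..n} - fst ` set h" unfolding R_def by simp
  have "U w F c R m = Max (insert m (contv w F c R m ` R))" by (rule U_rec[OF fin])
  also have "\<dots> = max m (Max (contv w F c R m ` R))" using fin cond by (subst Max_insert) auto
  also have "\<dots> = contv w F c R m i" using cond P by simp
  finally show "U w F c ({0..n} - fst ` set h) (mh w h) = contv w F c ({0..n} - fst ` set h) (mh w h) i"
    unfolding R_def m_def .
qed

lemma sstar_present:
  assumes "sstar w F c n h = Present p"
  shows "p = best w h"
    and "U w F c ({0..n} - fst ` set h) (mh w h) = mh w h"
    and "{0..n} - fst ` set h \<noteq> {} \<Longrightarrow> Max (contv w F c ({0..n} - fst ` set h) (mh w h) ` ({0..n} - fst ` set h)) < mh w h"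
proof -
  define R where "R = {0..n} - fst ` set h"
  define m where "m = mh w h"
  have fin: "finite R" unfolding R_def by auto
  have cond: "\<not> (R \<noteq> {} \<and> m \<le> Max (contv w F c R m ` R))" and p: "p = best w h"
    using assms unfolding sstar_def R_def m_def Let_def by (auto split: if_splits)
  then show "p = best w h" by simp
  show "{0..n} - fst ` set h \<noteq> {} \<Longrightarrow> Max (contv w F c ({0..n} - fst ` set h) (mh w h) ` ({0..n} - fst ` set h)) < mh w h"
  proof -
    assume "{0..n} - fst ` set h \<noteq> {}"
    then have "\<not> mh w h \<le> Max (contv w F c ({0..n} - fst ` set h) (mh w h) ` ({0..n} - fst ` set h))"
      using cond unfolding R_def m_def by blast
    then show ?thesis by (simp only: not_le)
  qed
  have "U w F c R m = m"
  proof (cases "R = {}")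
    case True then show ?thesis using U_rec[OF fin, of w F c m] by simp
  next
    case False
    then have "Max (contv w F c R m ` R) < m" using cond by auto
    then show ?thesis unfolding U_rec[OF fin] using fin False by (subst Max_insert) auto
  qed
  then show "U w F c ({0..n} - fst ` set h) (mh w h) = mh w h" unfolding R_def m_def .
qed


lemma sstar_valid: "valid_strategy n (sstar w F c n)"
proof -
  have A: "i \<le> n \<and> i \<notin> fst ` set h" if "sstar w F c n h = Open i" for h i
    using sstar_open(1)[OF that] by auto
  have B: "p = 0 \<or> p \<in> snd ` set h" if "sstar w F c n h = Present p" for h p
    using sstar_present(1)[OF that] best_in[of w h] by auto
  show ?thesis unfolding valid_strategy_def using A B by blast
qed

lemma value_sstar:
  assumes F: "\<And>j. prob_space (F j)" and wi: "\<And>j. integrable (F j) w"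
  shows "fst ` set h \<subseteq> {0..n} \<Longrightarrow> card ({0..n} - fst ` set h) < k \<Longrightarrow>
    integrable (PiM ({0..n} - fst ` set h) F) (\<lambda>y. apay w c (run (sstar w F c n) y k h)) \<Longrightarrow>
    (\<integral>y. apay w c (run (sstar w F c n) y k h) \<partial>PiM ({0..n} - fst ` set h) F)
      = U w F c ({0..n} - fst ` set h) (mh w h) - (\<Sum>j\<in>fst ` set h. c j)"
proof (induction k arbitrary: h)
  case 0 then show ?case by simp
next
  case (Suc k)
  define R where "R = {0..n} - fst ` set h"
  have finR: "finite R" unfolding R_def by auto
  interpret P: prob_space "PiM R F" by (intro prob_space_PiM F)
  have v: "valid_strategy n (sstar w F c n)" by (rule sstar_valid)
  show ?case
  proof (cases "sstar w F c n h")
    case (Present p)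
    note SP = sstar_present[OF Present]
    have "(\<integral>y. apay w c (run (sstar w F c n) y (Suc k) h) \<partial>PiM R F) = w p - (\<Sum>j\<in>fst ` set h. c j)"
      using Present by (simp add: apay_def P.prob_space)
    also have "w p = mh w h" using SP(1) w_best by simp
    also have "mh w h = U w F c R (mh w h)" using SP(2) unfolding R_def by simp
    finally show ?thesis unfolding R_def by simp
  next
    case (Open i)
    note S = split_run[OF F v Open Suc.prems(3)]
    note SO = sstar_open[OF Open]
    have iR: "i \<in> R" using S(1) unfolding R_def .
    have inh: "i \<notin> fst ` set h" using iR unfolding R_def by auto
    let ?m = "mh w h"
    let ?C = "(\<Sum>j\<in>fst ` set h. c j)"
    have AEb: "AE t in F i. (\<integral>y. apay w c (run (sstar w F c n) y k (h @ [(i,t)])) \<partial>PiM (R - {i}) F)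
        = U w F c (R - {i}) (max ?m (w t)) - (?C + c i)"
      using S(2)
    proof eventually_elim
      case (elim t)
      have "(\<integral>y. apay w c (run (sstar w F c n) y k (h @ [(i,t)])) \<partial>PiM ({0..n} - fst ` set (h @ [(i,t)])) F)
         = U w F c ({0..n} - fst ` set (h @ [(i,t)])) (mh w (h @ [(i,t)])) - (\<Sum>j\<in>fst ` set (h @ [(i,t)]). c j)"
      proof (rule Suc.IH)
        show "fst ` set (h @ [(i, t)]) \<subseteq> {0..n}" using Suc.prems(1) S(1) by auto
        show "card ({0..n} - fst ` set (h @ [(i, t)])) < k" by (rule card_step[OF S(1) Suc.prems(2)])
        show "integrable (PiM ({0..n} - fst ` set (h @ [(i, t)])) F) (\<lambda>y. apay w c (run (sstar w F c n) y k (h @ [(i, t)])))"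
          using elim by (simp only: diff_append)
      qed
      then show ?case unfolding diff_append mh_append sum_append[OF inh] R_def by simp
    qed
    have intU0: "integrable (F i) (\<lambda>t. U w F c (R - {i}) (max ?m (w t)))"
      by (rule U_integrable[OF F wi]) (use finR in auto)
    have intU: "integrable (F i) (\<lambda>t. U w F c (R - {i}) (max ?m (w t)) - (?C + c i))"
      by (intro Bochner_Integration.integrable_diff intU0 finite_measure.integrable_const prob_space.finite_measure F)
    have "(\<integral>y. apay w c (run (sstar w F c n) y (Suc k) h) \<partial>PiM R F)
        = (\<integral>t. (\<integral>y. apay w c (run (sstar w F c n) y k (h @ [(i,t)])) \<partial>PiM (R - {i}) F) \<partial>F i)"
      using S(4) unfolding R_def .
    also have "\<dots> = (\<integral>t. U w F c (R - {i}) (max ?m (w t)) - (?C + c i) \<partial>F i)"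
      using S(3) intU AEb unfolding R_def by (intro integral_cong_AE) auto
    also have "\<dots> = contv w F c R ?m i - ?C"
      unfolding contv_def using intU0 F[THEN prob_space.prob_space]
      by (subst Bochner_Integration.integral_diff) (auto intro: finite_measure.integrable_const prob_space.finite_measure F)
    also have "contv w F c R ?m i = U w F c R ?m"
      using SO(2) unfolding R_def by simp
    finally show ?thesis unfolding R_def by simp
  qed
qed

lemma best_g:
  assumes mw: "mono_on {0..} w" and mg: "mono_on {0..} (\<lambda>y. y - w y)"
    and nn: "\<forall>q \<in> insert 0 (snd ` set h). 0 \<le> q" and q: "q \<in> insert 0 (snd ` set h)"
  shows "q - w q \<le> best w h - w (best w h)"
proof -
  let ?b = "best w h"
  have bin: "?b \<in> insert 0 (snd ` set h)" by (rule best_in)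
  have b0: "0 \<le> ?b" using nn bin by auto
  have q0: "0 \<le> q" using nn q by auto
  have wq: "w q \<le> w ?b" using mh_ge[OF q] w_best[of w h] by simp
  have "q \<le> ?b"
  proof (cases "w q = w ?b")
    case True then show ?thesis using best_max[OF q] w_best[of w h] by simp
  next
    case False
    then have lt: "w q < w ?b" using wq by simp
    show ?thesis
    proof (rule ccontr)
      assume "\<not> q \<le> ?b"
      then have "w ?b \<le> w q" using mw b0 q0 unfolding mono_on_def by auto
      then show False using lt by simp
    qed
  qed
  then show ?thesis using mg b0 q0 unfolding mono_on_def by auto
qed

lemma sstar_final_ge:
  assumes mw: "mono_on {0..} w" and mg: "mono_on {0..} (\<lambda>y. y - w y)"
    and hN: "fst ` set h \<subseteq> {0..n}" and k: "card ({0..n} - fst ` set h) < k"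
    and nnh: "\<forall>v \<in> snd ` set h. 0 \<le> v" and nny: "\<forall>j \<in> {0..n} - fst ` set h. 0 \<le> y j"
    and v: "v \<in> snd ` set h"
  shows "v - w v \<le> snd (run (sstar w F c n) y k h) - w (snd (run (sstar w F c n) y k h))"
proof -
  let ?r = "run (sstar w F c n) y k h"
  have val: "valid_strategy n (sstar w F c n)" by (rule sstar_valid)
  have "sstar w F c n (fst ?r) = Present (snd ?r)" by (rule run_fuel[OF val hN k])
  then have sr: "snd ?r = best w (fst ?r)" by (rule sstar_present(1))
  obtain h' where hp: "fst ?r = h @ h'" using run_prefix by blast
  have nn: "\<forall>q \<in> insert 0 (snd ` set (fst ?r)). 0 \<le> q"
  proof
    fix q assume "q \<in> insert 0 (snd ` set (fst ?r))"
    then consider "q = 0" | j where "(j,q) \<in> set (fst ?r)" by force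
    then show "0 \<le> q"
    proof cases
      case (2 j)
      from run_vals[OF val 2] show ?thesis using nnh nny by force
    qed simp
  qed
  have "v \<in> insert 0 (snd ` set (fst ?r))" using v hp by auto
  from best_g[OF mw mg nn this] show ?thesis unfolding sr .
qed


lemma AE_PiM_nonneg:
  assumes F: "\<And>j. prob_space (F j)" and nn: "\<And>j. AE t in F j. 0 \<le> t" and R: "finite R"
  shows "AE y in PiM R F. \<forall>j\<in>R. 0 \<le> y j"
  using R by (intro eventually_ball_finite ballI AE_PiM_component F nn) auto

lemma princ_lower:
  assumes F: "\<And>j. prob_space (F j)" and wi: "\<And>j. integrable (F j) w"
    and mw: "mono_on {0..} w" and mg: "mono_on {0..} (\<lambda>y. y - w y)"
    and nnF: "\<And>j. AE t in F j. 0 \<le> t" and gi: "integrable (F 0) (\<lambda>t. t - w t)"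
    and Bh: "\<And>x. 0 \<le> x \<Longrightarrow> (\<integral>t. max 0 (w t - w x) \<partial>F 0) < c 0 \<Longrightarrow> B \<le> x - w x"
  shows "fst ` set h \<subseteq> {0..n} \<Longrightarrow> 0 \<notin> fst ` set h \<Longrightarrow> (\<forall>v\<in>snd ` set h. 0 \<le> v) \<Longrightarrow>
    card ({0..n} - fst ` set h) < k \<Longrightarrow>
    integrable (PiM ({0..n} - fst ` set h) F) (\<lambda>y. snd (run (sstar w F c n) y k h) - w (snd (run (sstar w F c n) y k h))) \<Longrightarrow>
    min (\<integral>t. t - w t \<partial>F 0) B \<le> (\<integral>y. snd (run (sstar w F c n) y k h) - w (snd (run (sstar w F c n) y k h)) \<partial>PiM ({0..n} - fst ` set h) F)"
proof (induction k arbitrary: h)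
  case 0 then show ?case by simp
next
  case (Suc k)
  define R where "R = {0..n} - fst ` set h"
  have finR: "finite R" unfolding R_def by auto
  have R0: "0 \<in> R" using Suc.prems(2) unfolding R_def by auto
  interpret P: prob_space "PiM R F" by (intro prob_space_PiM F)
  have v: "valid_strategy n (sstar w F c n)" by (rule sstar_valid)
  let ?g = "\<lambda>x::real. x - w x"
  let ?m = "mh w h"
  show ?case
  proof (cases "sstar w F c n h")
    case (Present p)
    note SP = sstar_present[OF Present]
    have ne: "{0..n} - fst ` set h \<noteq> {}" using R0 unfolding R_def by auto
    have lt: "Max (contv w F c R ?m ` R) < ?m" unfolding R_def by (rule SP(3)[OF ne])
    have "contv w F c R ?m 0 \<le> Max (contv w F c R ?m ` R)" using finR R0 by (intro Max_ge) auto
    with lt have c0lt: "contv w F c R ?m 0 < ?m" by simp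
    have int1: "integrable (F 0) (\<lambda>t. max 0 (w t - ?m))"
      using wi[of 0] F[of 0] by (intro integrable_max finite_measure.integrable_const prob_space.finite_measure Bochner_Integration.integrable_diff) auto
    have int2: "integrable (F 0) (\<lambda>t. U w F c (R - {0}) (max ?m (w t)))"
      by (rule U_integrable[OF F wi]) (use finR in auto)
    have "?m + (\<integral>t. max 0 (w t - ?m) \<partial>F 0) = (\<integral>t. ?m + max 0 (w t - ?m) \<partial>F 0)"
      using int1 F[of 0, THEN prob_space.prob_space]
      by (subst Bochner_Integration.integral_add) (auto intro: finite_measure.integrable_const prob_space.finite_measure F)
    also have "\<dots> \<le> (\<integral>t. U w F c (R - {0}) (max ?m (w t)) \<partial>F 0)"
    proof (rule integral_mono)
      show "integrable (F 0) (\<lambda>t. ?m + max 0 (w t - ?m))"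
        using int1 F[of 0] by (intro Bochner_Integration.integrable_add finite_measure.integrable_const prob_space.finite_measure) auto
      show "integrable (F 0) (\<lambda>t. U w F c (R - {0}) (max ?m (w t)))" by (rule int2)
      fix t
      have "max ?m (w t) \<le> U w F c (R - {0}) (max ?m (w t))" by (rule U_props(2)) (use F wi finR in auto)
      then show "?m + max 0 (w t - ?m) \<le> U w F c (R - {0}) (max ?m (w t))" by (simp add: max_def split: if_splits)
    qed
    finally have "(\<integral>t. max 0 (w t - ?m) \<partial>F 0) < c 0" using c0lt unfolding contv_def by simp
    moreover have b0: "0 \<le> best w h" using best_in[of w h] Suc.prems(3) by auto
    ultimately have Bb: "B \<le> ?g (best w h)" using Bh[of "best w h"] w_best[of w h] by simp
    have "(\<integral>y. snd (run (sstar w F c n) y (Suc k) h) - w (snd (run (sstar w F c n) y (Suc k) h)) \<partial>PiM R F) = ?g (best w h)"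
      using Present SP(1) by (simp add: P.prob_space)
    then show ?thesis using Bb unfolding R_def by simp
  next
    case (Open i)
    note S = split_run[OF F v Open Suc.prems(5)]
    have iR: "i \<in> R" using S(1) unfolding R_def .
    have inh: "i \<notin> fst ` set h" using iR unfolding R_def by auto
    have intmin: "integrable (F i) (\<lambda>t. min (\<integral>t. t - w t \<partial>F 0) B)"
      by (intro finite_measure.integrable_const prob_space.finite_measure F)
    show ?thesis
    proof (cases "i = 0")
      case True
      have AEb: "AE t in F i. ?g t \<le> (\<integral>y. snd (run (sstar w F c n) y k (h @ [(i,t)])) - w (snd (run (sstar w F c n) y k (h @ [(i,t)]))) \<partial>PiM (R - {i}) F)"
        using S(2) nnF[of i]
      proof eventually_elim
        case (elim t)
        interpret Q: prob_space "PiM (R - {i}) F" by (intro prob_space_PiM F)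
        have "(\<integral>y. ?g t \<partial>PiM (R - {i}) F) \<le> (\<integral>y. snd (run (sstar w F c n) y k (h @ [(i,t)])) - w (snd (run (sstar w F c n) y k (h @ [(i,t)]))) \<partial>PiM (R - {i}) F)"
        proof (rule integral_mono_AE)
          show "integrable (PiM (R - {i}) F) (\<lambda>y. ?g t)" by simp
          show "integrable (PiM (R - {i}) F) (\<lambda>y. snd (run (sstar w F c n) y k (h @ [(i,t)])) - w (snd (run (sstar w F c n) y k (h @ [(i,t)]))))"
            using elim(1) unfolding R_def .
          show "AE y in PiM (R - {i}) F. ?g t \<le> snd (run (sstar w F c n) y k (h @ [(i,t)])) - w (snd (run (sstar w F c n) y k (h @ [(i,t)])))"
          proof -
            have nnR: "AE y in PiM (R - {i}) F. \<forall>j\<in>R - {i}. 0 \<le> y j"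
              by (rule AE_PiM_nonneg) (use F nnF finR in auto)
            then show ?thesis
          proof eventually_elim
            case (elim y)
            show ?case
            proof (rule sstar_final_ge[OF mw mg])
              show "fst ` set (h @ [(i, t)]) \<subseteq> {0..n}" using Suc.prems(1) S(1) by auto
              show "card ({0..n} - fst ` set (h @ [(i, t)])) < k" by (rule card_step[OF S(1) Suc.prems(4)])
              show "\<forall>v\<in>snd ` set (h @ [(i, t)]). 0 \<le> v" using Suc.prems(3) \<open>0 \<le> t\<close> by auto
              show "\<forall>j\<in>{0..n} - fst ` set (h @ [(i, t)]). 0 \<le> y j" using elim unfolding R_def diff_append by auto
              show "t \<in> snd ` set (h @ [(i, t)])" by auto
            qed
          qed
          qed
        qed
        then show ?case by (simp add: Q.prob_space)
      qed
      have "min (\<integral>t. t - w t \<partial>F 0) B \<le> (\<integral>t. ?g t \<partial>F i)" using True by simp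
      also have "\<dots> \<le> (\<integral>t. (\<integral>y. snd (run (sstar w F c n) y k (h @ [(i,t)])) - w (snd (run (sstar w F c n) y k (h @ [(i,t)]))) \<partial>PiM (R - {i}) F) \<partial>F i)"
        using S(3) gi True AEb unfolding R_def by (intro integral_mono_AE) auto
      also have "\<dots> = (\<integral>y. snd (run (sstar w F c n) y (Suc k) h) - w (snd (run (sstar w F c n) y (Suc k) h)) \<partial>PiM R F)"
        using S(4) unfolding R_def by simp
      finally show ?thesis unfolding R_def .
    next
      case False
      have AEb: "AE t in F i. min (\<integral>t. t - w t \<partial>F 0) B \<le> (\<integral>y. snd (run (sstar w F c n) y k (h @ [(i,t)])) - w (snd (run (sstar w F c n) y k (h @ [(i,t)]))) \<partial>PiM (R - {i}) F)"
        using S(2) nnF[of i]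
      proof eventually_elim
        case (elim t)
        have "min (\<integral>t. t - w t \<partial>F 0) B \<le> (\<integral>y. snd (run (sstar w F c n) y k (h @ [(i,t)])) - w (snd (run (sstar w F c n) y k (h @ [(i,t)]))) \<partial>PiM ({0..n} - fst ` set (h @ [(i,t)])) F)"
        proof (rule Suc.IH)
          show "fst ` set (h @ [(i, t)]) \<subseteq> {0..n}" using Suc.prems(1) S(1) by auto
          show "0 \<notin> fst ` set (h @ [(i, t)])" using Suc.prems(2) False by auto
          show "\<forall>v\<in>snd ` set (h @ [(i, t)]). 0 \<le> v" using Suc.prems(3) elim(2) by auto
          show "card ({0..n} - fst ` set (h @ [(i, t)])) < k" by (rule card_step[OF S(1) Suc.prems(4)])
          show "integrable (PiM ({0..n} - fst ` set (h @ [(i, t)])) F) (\<lambda>y. snd (run (sstar w F c n) y k (h @ [(i,t)])) - w (snd (run (sstar w F c n) y k (h @ [(i,t)]))))"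
            using elim(1) by (simp only: diff_append)
        qed
        then show ?case unfolding diff_append R_def by simp
      qed
      have "min (\<integral>t. t - w t \<partial>F 0) B = (\<integral>t. min (\<integral>t. t - w t \<partial>F 0) B \<partial>F i)"
        using F[of i, THEN prob_space.prob_space] by simp
      also have "\<dots> \<le> (\<integral>t. (\<integral>y. snd (run (sstar w F c n) y k (h @ [(i,t)])) - w (snd (run (sstar w F c n) y k (h @ [(i,t)]))) \<partial>PiM (R - {i}) F) \<partial>F i)"
        using S(3) intmin AEb unfolding R_def by (intro integral_mono_AE) auto
      also have "\<dots> = (\<integral>y. snd (run (sstar w F c n) y (Suc k) h) - w (snd (run (sstar w F c n) y (Suc k) h)) \<partial>PiM R F)"
        using S(4) unfolding R_def by simp
      finally show ?thesis unfolding R_def .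
    qed
  qed
qed




definition hist :: "nat list \<Rightarrow> (nat \<Rightarrow> real) \<Rightarrow> history" where
  "hist L y = map (\<lambda>j. (j, y j)) L"

fun aidx :: "action \<Rightarrow> nat option" where
  "aidx (Open i) = Some i" | "aidx (Present p) = None"

fun aval :: "action \<Rightarrow> real" where
  "aval (Open i) = 0" | "aval (Present p) = p"

lemma meas_run:
  assumes v: "valid_strategy n \<sigma>"
    and A1: "\<And>L. set L \<subseteq> {0..n} \<Longrightarrow> (\<lambda>y. aidx (\<sigma> (hist L y))) \<in> measurable M (count_space UNIV)"
    and A2: "\<And>L. set L \<subseteq> {0..n} \<Longrightarrow> (\<lambda>y. aval (\<sigma> (hist L y))) \<in> borel_measurable M"
  shows "set L \<subseteq> {0..n} \<Longrightarrow> (\<lambda>y. map fst (fst (run \<sigma> y k (hist L y)))) \<in> measurable M (count_space UNIV)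
     \<and> (\<lambda>y. snd (run \<sigma> y k (hist L y))) \<in> borel_measurable M"
proof (induction k arbitrary: L)
  case 0
  have "map fst (hist L y) = L" for y by (simp add: hist_def comp_def)
  then show ?case by simp
next
  case (Suc k)
  define G where "G = (\<lambda>ac y. (case ac of None \<Rightarrow> L | Some i \<Rightarrow> (if i \<le> n then map fst (fst (run \<sigma> y k (hist (L @ [i]) y))) else [])))"
  define H where "H = (\<lambda>ac y. (case ac of None \<Rightarrow> aval (\<sigma> (hist L y)) | Some i \<Rightarrow> (if i \<le> n then snd (run \<sigma> y k (hist (L @ [i]) y)) else 0)))"
  have eq: "map fst (fst (run \<sigma> y (Suc k) (hist L y))) = G (aidx (\<sigma> (hist L y))) y \<and>
            snd (run \<sigma> y (Suc k) (hist L y)) = H (aidx (\<sigma> (hist L y))) y" for y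
  proof (cases "\<sigma> (hist L y)")
    case (Open i)
    then have "i \<le> n" using v unfolding valid_strategy_def by blast
    moreover have "hist L y @ [(i, y i)] = hist (L @ [i]) y" by (simp add: hist_def)
    ultimately show ?thesis using Open by (simp add: G_def H_def)
  next
    case (Present p)
    then show ?thesis by (simp add: G_def H_def hist_def comp_def)
  qed
  have mG: "(\<lambda>y. G ac y) \<in> measurable M (count_space UNIV)" for ac
  proof (cases ac)
    case (Some i)
    show ?thesis
    proof (cases "i \<le> n")
      case True
      then have "set (L @ [i]) \<subseteq> {0..n}" using Suc.prems by auto
      then show ?thesis using Suc.IH Some True by (simp add: G_def)
    qed (simp add: G_def Some)
  qed (simp add: G_def)
  have mH: "(\<lambda>y. H ac y) \<in> borel_measurable M" for ac
  proof (cases ac)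
    case (Some i)
    show ?thesis
    proof (cases "i \<le> n")
      case True
      then have "set (L @ [i]) \<subseteq> {0..n}" using Suc.prems by auto
      then show ?thesis using Suc.IH Some True by (simp add: H_def)
    qed (simp add: H_def Some)
  qed (use A2[OF Suc.prems] in \<open>simp add: H_def\<close>)
  have "(\<lambda>y. G (aidx (\<sigma> (hist L y))) y) \<in> measurable M (count_space UNIV)"
    by (rule measurable_compose_countable[OF mG A1[OF Suc.prems]])
  moreover have "(\<lambda>y. H (aidx (\<sigma> (hist L y))) y) \<in> borel_measurable M"
    by (rule measurable_compose_countable[OF mH A1[OF Suc.prems]])
  ultimately show ?case using eq by simp
qed


lemma comp_meas:
  assumes sF: "\<And>j. sets (F j) = sets borel" and j: "j \<in> I"
  shows "(\<lambda>y. y j) \<in> borel_measurable (PiM I F)"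
proof -
  have "(\<lambda>y. y j) \<in> measurable (PiM I F) (F j)" by (rule measurable_component_singleton[OF j])
  then show ?thesis by (subst (asm) measurable_cong_sets[OF refl sF[of j]])
qed

lemma hist_meas:
  assumes sF: "\<And>j. sets (F j) = sets borel" and wm[measurable]: "w \<in> borel_measurable borel"
  shows "set L \<subseteq> I \<Longrightarrow> (\<lambda>y. mh w (hist L y)) \<in> borel_measurable (PiM I F) \<and> (\<lambda>y. best w (hist L y)) \<in> borel_measurable (PiM I F)"
proof (induction L)
  case Nil then show ?case by (simp add: hist_def)
next
  case (Cons j L)
  have IH1[measurable]: "(\<lambda>y. mh w (hist L y)) \<in> borel_measurable (PiM I F)" using Cons by auto
  have IH2[measurable]: "(\<lambda>y. best w (hist L y)) \<in> borel_measurable (PiM I F)" using Cons by auto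
  define yj where "yj = (\<lambda>y::nat\<Rightarrow>real. y j)"
  have cj[measurable]: "yj \<in> borel_measurable (PiM I F)" unfolding yj_def using Cons.prems comp_meas[OF sF] by auto
  have hc: "hist (j # L) y = (j, yj y) # hist L y" for y by (simp add: hist_def yj_def)
  have e1: "(\<lambda>y. mh w (hist (j # L) y)) = (\<lambda>y. max (w (yj y)) (mh w (hist L y)))" by (simp only: hc mh.simps)
  have e2: "(\<lambda>y. best w (hist (j # L) y)) = (\<lambda>y. if w (best w (hist L y)) < w (yj y) \<or> (w (best w (hist L y)) = w (yj y) \<and> best w (hist L y) < yj y) then yj y else best w (hist L y))"
    by (simp only: hc best.simps)
  let ?M = "PiM I F"
  have bm1: "(\<lambda>x. w (best w (hist L x))) \<in> borel_measurable ?M" by measurable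
  have bm2: "(\<lambda>x. w (yj x)) \<in> borel_measurable ?M" by measurable
  have s1: "{x \<in> space ?M. w (best w (hist L x)) < w (yj x)} \<in> sets ?M" by (rule borel_measurable_less[OF bm1 bm2])
  have s2: "{x \<in> space ?M. w (best w (hist L x)) = w (yj x)} \<in> sets ?M" by (rule borel_measurable_eq[OF bm1 bm2])
  have s3: "{x \<in> space ?M. best w (hist L x) < yj x} \<in> sets ?M" by (rule borel_measurable_less[OF IH2 cj])
  have "{x \<in> space ?M. w (best w (hist L x)) < w (yj x) \<or> (w (best w (hist L x)) = w (yj x) \<and> best w (hist L x) < yj x)}
     = {x \<in> space ?M. w (best w (hist L x)) < w (yj x)} \<union> ({x \<in> space ?M. w (best w (hist L x)) = w (yj x)} \<inter> {x \<in> space ?M. best w (hist L x) < yj x})"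
    by auto
  also have "\<dots> \<in> sets ?M" using s1 s2 s3 by auto
  finally have s: "{x \<in> space ?M. w (best w (hist L x)) < w (yj x) \<or> (w (best w (hist L x)) = w (yj x) \<and> best w (hist L x) < yj x)} \<in> sets ?M" .
  have "(\<lambda>y. best w (hist (j # L) y)) \<in> borel_measurable ?M"
    unfolding e2 by (rule measurable_If[OF cj IH2 s])
  moreover have "(\<lambda>y. mh w (hist (j # L) y)) \<in> borel_measurable ?M"
    unfolding e1 by measurable
  ultimately show ?case by simp
qed

lemma sstar_meas:
  assumes F: "\<And>j. prob_space (F j)" and wi: "\<And>j. integrable (F j) w"
    and sF: "\<And>j. sets (F j) = sets borel" and wm[measurable]: "w \<in> borel_measurable borel"
    and L: "set L \<subseteq> {0..n}"
  shows "(\<lambda>y. aidx (sstar w F c n (hist L y))) \<in> measurable (PiM {0..n} F) (count_space UNIV)"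
    and "(\<lambda>y. aval (sstar w F c n (hist L y))) \<in> borel_measurable (PiM {0..n} F)"
proof -
  define R where "R = {0..n} - set L"
  have finR: "finite R" unfolding R_def by auto
  have cm[measurable]: "(\<lambda>m. contv w F c R m i) \<in> borel_measurable borel" for i
    by (rule monolip_meas[OF contv_monolip[OF F wi finR]])
  have mx[measurable]: "(\<lambda>m. Max (contv w F c R m ` R)) \<in> borel_measurable borel"
    using borel_measurable_Max[OF finR, of "\<lambda>i m. contv w F c R m i" borel] cm by simp
  have hm[measurable]: "(\<lambda>y. mh w (hist L y)) \<in> borel_measurable (PiM {0..n} F)"
    and hb[measurable]: "(\<lambda>y. best w (hist L y)) \<in> borel_measurable (PiM {0..n} F)"
    using hist_meas[OF sF wm L] by auto
  have fsh: "fst ` set (hist L y) = set L" for y by (force simp: hist_def)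
  define \<Phi> where "\<Phi> = (\<lambda>m. if R \<noteq> {} \<and> m \<le> Max (contv w F c R m ` R) then Some (LEAST i. i \<in> R \<and> contv w F c R m i = Max (contv w F c R m ` R)) else None)"
  have e1: "aidx (sstar w F c n (hist L y)) = \<Phi> (mh w (hist L y))" for y
    unfolding sstar_def fsh R_def[symmetric] \<Phi>_def Let_def by simp
  have e2: "aval (sstar w F c n (hist L y)) = (if R \<noteq> {} \<and> mh w (hist L y) \<le> Max (contv w F c R (mh w (hist L y)) ` R) then 0 else best w (hist L y))" for y
    unfolding sstar_def fsh R_def[symmetric] Let_def by simp
  have lm: "(\<lambda>m. LEAST i. i \<in> R \<and> contv w F c R m i = Max (contv w F c R m ` R)) \<in> measurable borel (count_space UNIV)"
    by measurable
  have "\<Phi> \<in> measurable borel (count_space UNIV)"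
    unfolding \<Phi>_def
  proof (rule measurable_If)
    show "(\<lambda>m. Some (LEAST i. i \<in> R \<and> contv w F c R m i = Max (contv w F c R m ` R))) \<in> measurable borel (count_space UNIV)"
      using measurable_compose[OF lm measurable_count_space, of Some] by (simp add: comp_def)
    show "(\<lambda>m. None) \<in> measurable borel (count_space UNIV)" by simp
    show "{m \<in> space borel. R \<noteq> {} \<and> m \<le> Max (contv w F c R m ` R)} \<in> sets borel" by measurable
  qed
  then show "(\<lambda>y. aidx (sstar w F c n (hist L y))) \<in> measurable (PiM {0..n} F) (count_space UNIV)"
    unfolding e1 using hm by (rule measurable_compose[rotated])
  show "(\<lambda>y. aval (sstar w F c n (hist L y))) \<in> borel_measurable (PiM {0..n} F)"
    unfolding e2 by measurable
qed




lemma comp_integrable: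
  fixes F :: "nat \<Rightarrow> real measure" and f :: "real \<Rightarrow> real"
  assumes F: "\<And>j. prob_space (F j)" and sF: "\<And>j. sets (F j) = sets borel"
    and j: "j \<in> I" and f: "integrable (F j) f"
  shows "integrable (PiM I F) (\<lambda>y. f (y j))" and "(\<integral>y. f (y j) \<partial>PiM I F) = integral\<^sup>L (F j) f"
proof -
  have m: "(\<lambda>y. y j) \<in> measurable (PiM I F) (F j)" by (rule measurable_component_singleton[OF j])
  have fm: "f \<in> borel_measurable (F j)" using f by auto
  have D: "distr (PiM I F) (F j) (\<lambda>y. y j) = F j" by (rule distr_PiM_component[OF F j])
  show "integrable (PiM I F) (\<lambda>y. f (y j))" using integrable_distr_eq[OF m fm] D f by simp
  show "(\<integral>y. f (y j) \<partial>PiM I F) = integral\<^sup>L (F j) f" using integral_distr[OF m fm] D by simp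
qed

lemma run0_vals:
  assumes v: "valid_strategy n \<tau>"
  shows "snd (run \<tau> y k []) = 0 \<or> (\<exists>j\<le>n. snd (run \<tau> y k []) = y j)"
    and "fst ` set (fst (run \<tau> y k [])) \<subseteq> {0..n}"
proof -
  have p: "snd (run \<tau> y k []) \<in> insert 0 (snd ` set (fst (run \<tau> y k [])))" by (rule run_pres[OF v])
  have vv: "\<And>j u. (j,u) \<in> set (fst (run \<tau> y k [])) \<Longrightarrow> j \<le> n \<and> u = y j"
    using run_vals[OF v] by fastforce
  from p vv show "snd (run \<tau> y k []) = 0 \<or> (\<exists>j\<le>n. snd (run \<tau> y k []) = y j)" by force
  from vv show "fst ` set (fst (run \<tau> y k [])) \<subseteq> {0..n}" by force
qed

lemma INT:
  assumes F: "\<And>j. prob_space (F j)" and sF: "\<And>j. sets (F j) = sets borel"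
    and wi: "\<And>j. integrable (F j) w" and ii: "\<And>j. integrable (F j) (\<lambda>t. t)"
    and wm: "w \<in> borel_measurable borel" and v: "valid_strategy n \<tau>"
    and mp: "(\<lambda>y. snd (run \<tau> y k [])) \<in> borel_measurable (PiM {0..n} F)"
    and mo: "(\<lambda>y. fst ` set (fst (run \<tau> y k []))) \<in> measurable (PiM {0..n} F) (count_space UNIV)"
  shows "integrable (PiM {0..n} F) (\<lambda>y. apay w c (run \<tau> y k []))"
    and "integrable (PiM {0..n} F) (\<lambda>y. snd (run \<tau> y k []) - w (snd (run \<tau> y k [])))"
proof -
  let ?M = "PiM {0..n} F"
  have iw: "integrable ?M (\<lambda>y. \<bar>w 0\<bar> + (\<Sum>j\<in>{0..n}. \<bar>w (y j)\<bar>) + (\<Sum>j\<in>{0..n}. \<bar>c j\<bar>))"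
  proof -
    interpret P: prob_space ?M by (intro prob_space_PiM F)
    have "integrable ?M (\<lambda>y. \<bar>w (y j)\<bar>)" if "j \<in> {0..n}" for j
      using comp_integrable(1)[OF F sF that, where f="\<lambda>t. \<bar>w t\<bar>"] wi by auto
    then show ?thesis by (intro Bochner_Integration.integrable_add integrable_sum) auto
  qed
  have iy: "integrable ?M (\<lambda>y. \<bar>w 0\<bar> + (\<Sum>j\<in>{0..n}. \<bar>w (y j)\<bar>) + (\<Sum>j\<in>{0..n}. \<bar>y j\<bar>))"
  proof -
    interpret P: prob_space ?M by (intro prob_space_PiM F)
    have "integrable ?M (\<lambda>y. \<bar>w (y j)\<bar>)" if "j \<in> {0..n}" for j
      using comp_integrable(1)[OF F sF that, where f="\<lambda>t. \<bar>w t\<bar>"] wi by auto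
    moreover have "integrable ?M (\<lambda>y. \<bar>y j\<bar>)" if "j \<in> {0..n}" for j
      using comp_integrable(1)[OF F sF that, where f="\<lambda>t. \<bar>t\<bar>"] ii by auto
    ultimately show ?thesis by (intro Bochner_Integration.integrable_add integrable_sum) auto
  qed
  have wp: "\<bar>w (snd (run \<tau> y k []))\<bar> \<le> \<bar>w 0\<bar> + (\<Sum>j\<in>{0..n}. \<bar>w (y j)\<bar>)" for y
  proof -
    from run0_vals(1)[OF v, of y k] show ?thesis
    proof
      assume "snd (run \<tau> y k []) = 0" then show ?thesis by (simp add: sum_nonneg)
    next
      assume "\<exists>j\<le>n. snd (run \<tau> y k []) = y j"
      then obtain j where j: "j \<le> n" "snd (run \<tau> y k []) = y j" by blast
      have "\<bar>w (y j)\<bar> \<le> (\<Sum>j\<in>{0..n}. \<bar>w (y j)\<bar>)" using j by (intro member_le_sum) auto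
      then show ?thesis using j by simp
    qed
  qed
  have yp: "\<bar>snd (run \<tau> y k [])\<bar> \<le> (\<Sum>j\<in>{0..n}. \<bar>y j\<bar>)" for y
  proof -
    from run0_vals(1)[OF v, of y k] show ?thesis
    proof
      assume "snd (run \<tau> y k []) = 0" then show ?thesis by (simp add: sum_nonneg)
    next
      assume "\<exists>j\<le>n. snd (run \<tau> y k []) = y j"
      then obtain j where j: "j \<le> n" "snd (run \<tau> y k []) = y j" by blast
      have "\<bar>y j\<bar> \<le> (\<Sum>j\<in>{0..n}. \<bar>y j\<bar>)" using j by (intro member_le_sum) auto
      then show ?thesis using j by simp
    qed
  qed
  have cp: "\<bar>\<Sum>j\<in>fst ` set (fst (run \<tau> y k [])). c j\<bar> \<le> (\<Sum>j\<in>{0..n}. \<bar>c j\<bar>)" for y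
  proof -
    have "\<bar>\<Sum>j\<in>fst ` set (fst (run \<tau> y k [])). c j\<bar> \<le> (\<Sum>j\<in>fst ` set (fst (run \<tau> y k [])). \<bar>c j\<bar>)"
      by (rule sum_abs)
    also have "\<dots> \<le> (\<Sum>j\<in>{0..n}. \<bar>c j\<bar>)" using run0_vals(2)[OF v, of y k] by (intro sum_mono2) auto
    finally show ?thesis .
  qed
  have ms: "(\<lambda>y. \<Sum>j\<in>fst ` set (fst (run \<tau> y k [])). c j) \<in> borel_measurable ?M"
    using measurable_compose[OF mo, of "\<lambda>S. \<Sum>j\<in>S. c j" borel] by simp
  have mw: "(\<lambda>y. w (snd (run \<tau> y k []))) \<in> borel_measurable ?M"
    using measurable_compose[OF mp wm] .
  show "integrable ?M (\<lambda>y. apay w c (run \<tau> y k []))"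
  proof (rule Bochner_Integration.integrable_bound[OF iw])
    show "(\<lambda>y. apay w c (run \<tau> y k [])) \<in> borel_measurable ?M"
      unfolding apay_def using mw ms by measurable
    show "AE y in ?M. norm (apay w c (run \<tau> y k [])) \<le> norm (\<bar>w 0\<bar> + (\<Sum>j\<in>{0..n}. \<bar>w (y j)\<bar>) + (\<Sum>j\<in>{0..n}. \<bar>c j\<bar>))"
    proof (intro AE_I2)
      fix y
      have "0 \<le> \<bar>w 0\<bar> + (\<Sum>j\<in>{0..n}. \<bar>w (y j)\<bar>) + (\<Sum>j\<in>{0..n}. \<bar>c j\<bar>)" by (simp add: sum_nonneg)
      then show "norm (apay w c (run \<tau> y k [])) \<le> norm (\<bar>w 0\<bar> + (\<Sum>j\<in>{0..n}. \<bar>w (y j)\<bar>) + (\<Sum>j\<in>{0..n}. \<bar>c j\<bar>))"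
        using wp[of y] cp[of y] unfolding apay_def by simp
    qed
  qed
  show "integrable ?M (\<lambda>y. snd (run \<tau> y k []) - w (snd (run \<tau> y k [])))"
  proof (rule Bochner_Integration.integrable_bound[OF iy])
    show "(\<lambda>y. snd (run \<tau> y k []) - w (snd (run \<tau> y k []))) \<in> borel_measurable ?M"
      using mw mp by measurable
    show "AE y in ?M. norm (snd (run \<tau> y k []) - w (snd (run \<tau> y k []))) \<le> norm (\<bar>w 0\<bar> + (\<Sum>j\<in>{0..n}. \<bar>w (y j)\<bar>) + (\<Sum>j\<in>{0..n}. \<bar>y j\<bar>))"
    proof (intro AE_I2)
      fix y
      have "0 \<le> \<bar>w 0\<bar> + (\<Sum>j\<in>{0..n}. \<bar>w (y j)\<bar>) + (\<Sum>j\<in>{0..n}. \<bar>y j\<bar>)" by (simp add: sum_nonneg)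
      then show "norm (snd (run \<tau> y k []) - w (snd (run \<tau> y k []))) \<le> norm (\<bar>w 0\<bar> + (\<Sum>j\<in>{0..n}. \<bar>w (y j)\<bar>) + (\<Sum>j\<in>{0..n}. \<bar>y j\<bar>))"
        using wp[of y] yp[of y] by simp
    qed
  qed
qed




definition Fa :: "nat \<Rightarrow> (nat \<Rightarrow> project) \<Rightarrow> nat \<Rightarrow> real measure" where
  "Fa n a i = (if i \<le> n then fst (a i) else fst (a 0))"

lemma Fa_facts:
  assumes va: "\<forall>i\<le>n. valid_project (a i)" and cw: "contract w" and dm: "doubly_monotone w"
  shows "prob_space (Fa n a j)" "sets (Fa n a j) = sets borel" "AE t in Fa n a j. 0 \<le> t"
    "integrable (Fa n a j) (\<lambda>t. t)" "integrable (Fa n a j) w" "integrable (Fa n a j) (\<lambda>t. t - w t)"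
    "prizes n a = PiM {0..n} (Fa n a)"
proof -
  have vj: "valid_project (a (if j \<le> n then j else 0))" using va by auto
  have eq: "Fa n a j = fst (a (if j \<le> n then j else 0))" by (simp add: Fa_def)
  show P: "prob_space (Fa n a j)" using vj unfolding eq valid_project_def by auto
  show S: "sets (Fa n a j) = sets borel" using vj unfolding eq valid_project_def by auto
  show N: "AE t in Fa n a j. 0 \<le> t" using vj unfolding eq valid_project_def by auto
  show I: "integrable (Fa n a j) (\<lambda>t. t)" using vj unfolding eq valid_project_def by auto
  have wm: "w \<in> borel_measurable borel" using cw unfolding contract_def by auto
  then have wm': "w \<in> borel_measurable (Fa n a j)" by (subst measurable_cong_sets[OF S refl])
  have w0: "0 \<le> w 0" using cw unfolding contract_def by auto
  have mg: "mono_on {0..} (\<lambda>y. y - w y)" using dm unfolding doubly_monotone_def by auto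
  show W: "integrable (Fa n a j) w"
  proof (rule Bochner_Integration.integrable_bound[where f="\<lambda>t. t + w 0"])
    show "integrable (Fa n a j) (\<lambda>t. t + w 0)"
      using I P by (intro Bochner_Integration.integrable_add finite_measure.integrable_const prob_space.finite_measure)
    show "w \<in> borel_measurable (Fa n a j)" by (rule wm')
    show "AE t in Fa n a j. norm (w t) \<le> norm (t + w 0)"
      using N
    proof eventually_elim
      case (elim t)
      have "0 - w 0 \<le> t - w t" using mg elim unfolding mono_on_def by (metis atLeast_iff order_refl)
      moreover have "0 \<le> w t" using cw elim unfolding contract_def by auto
      ultimately show ?case using w0 elim by simp
    qed
  qed
  show "integrable (Fa n a j) (\<lambda>t. t - w t)" using I W by auto
  show "prizes n a = PiM {0..n} (Fa n a)" unfolding prizes_def by (rule PiM_cong) (auto simp: Fa_def)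
qed


lemma family_lower:
  assumes va: "\<forall>i\<le>n. valid_project (a i)" and cw: "contract w" and dm: "doubly_monotone w"
    and Bh: "\<And>x. 0 \<le> x \<Longrightarrow> (\<integral>t. max 0 (w t - w x) \<partial>fst (a 0)) < snd (a 0) \<Longrightarrow> B \<le> x - w x"
  shows "ereal (min (\<integral>t. t - w t \<partial>fst (a 0)) B) \<le> VP_cond w n a"
proof -
  define F where "F = Fa n a"
  define c where "c = (\<lambda>i. snd (a i))"
  define \<sigma> where "\<sigma> = sstar w F c n"
  note FF = Fa_facts[OF va cw dm, folded F_def]
  have F: "\<And>j. prob_space (F j)" and sF: "\<And>j. sets (F j) = sets borel" and nnF: "\<And>j. AE t in F j. 0 \<le> t"
    and ii: "\<And>j. integrable (F j) (\<lambda>t. t)" and wi: "\<And>j. integrable (F j) w"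
    and gi: "\<And>j. integrable (F j) (\<lambda>t. t - w t)" and pz: "prizes n a = PiM {0..n} F"
    using FF by auto
  have F0: "F 0 = fst (a 0)" unfolding F_def Fa_def by simp
  have wm: "w \<in> borel_measurable borel" using cw unfolding contract_def by auto
  have mw: "mono_on {0..} w" and mg: "mono_on {0..} (\<lambda>y. y - w y)" using dm unfolding doubly_monotone_def by auto
  have v: "valid_strategy n \<sigma>" unfolding \<sigma>_def by (rule sstar_valid)
  have h0: "hist [] y = []" for y by (simp add: hist_def)
  have MR: "(\<lambda>y. map fst (fst (run \<sigma> y k (hist [] y)))) \<in> measurable (PiM {0..n} F) (count_space UNIV)
     \<and> (\<lambda>y. snd (run \<sigma> y k (hist [] y))) \<in> borel_measurable (PiM {0..n} F)" for k
    unfolding \<sigma>_def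
    by (rule meas_run[OF sstar_valid]) (auto intro: sstar_meas[OF F wi sF wm])
  have mp: "(\<lambda>y. snd (run \<sigma> y (n+2) [])) \<in> borel_measurable (PiM {0..n} F)" using MR[of "n+2"] unfolding h0 by simp
  have mo: "(\<lambda>y. fst ` set (fst (run \<sigma> y (n+2) []))) \<in> measurable (PiM {0..n} F) (count_space UNIV)"
  proof -
    have "(\<lambda>y. set (map fst (fst (run \<sigma> y (n+2) [])))) \<in> measurable (PiM {0..n} F) (count_space UNIV)"
      using measurable_compose[OF MR[of "n+2", THEN conjunct1] measurable_count_space, of set] unfolding h0 by (simp add: comp_def)
    then show ?thesis by simp
  qed
  have adm: "admissible n a \<sigma>"
    unfolding admissible_def presented_def opened_def outcome_def pz using v mp mo by simp
  have card: "card ({0..n} - fst ` set ([]::history)) < n + 2" by simp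
  have AV: "agent_value w n a \<tau> = (\<integral>y. apay w c (run \<tau> y (n+2) []) \<partial>PiM {0..n} F)" for \<tau>
    unfolding agent_value_def presented_def opened_def outcome_def pz apay_def c_def by simp
  have PV: "principal_value w n a \<tau> = (\<integral>y. snd (run \<tau> y (n+2) []) - w (snd (run \<tau> y (n+2) [])) \<partial>PiM {0..n} F)" for \<tau>
    unfolding principal_value_def presented_def outcome_def pz by simp
  have iA: "integrable (PiM {0..n} F) (\<lambda>y. apay w c (run \<sigma> y (n+2) []))"
    by (rule INT(1)[OF F sF wi ii wm v mp mo])
  have "(\<integral>y. apay w c (run (sstar w F c n) y (n+2) []) \<partial>PiM ({0..n} - fst ` set ([]::history)) F)
      = U w F c ({0..n} - fst ` set ([]::history)) (mh w []) - (\<Sum>j\<in>fst ` set ([]::history). c j)"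
    by (rule value_sstar) (use F wi iA in \<open>auto simp: \<sigma>_def\<close>)
  then have vs: "agent_value w n a \<sigma> = U w F c {0..n} (w 0)"
    unfolding AV \<sigma>_def by simp
  have opt: "\<sigma> \<in> opt_strats w n a"
    unfolding opt_strats_def
  proof (intro CollectI conjI allI impI adm)
    fix \<tau> assume at: "admissible n a \<tau>"
    then have vt: "valid_strategy n \<tau>" and mpt: "(\<lambda>y. snd (run \<tau> y (n+2) [])) \<in> borel_measurable (PiM {0..n} F)"
      and mot: "(\<lambda>y. fst ` set (fst (run \<tau> y (n+2) []))) \<in> measurable (PiM {0..n} F) (count_space UNIV)"
      unfolding admissible_def presented_def opened_def outcome_def pz by auto
    have iT: "integrable (PiM {0..n} F) (\<lambda>y. apay w c (run \<tau> y (n+2) []))"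
      by (rule INT(1)[OF F sF wi ii wm vt mpt mot])
    have "(\<integral>y. apay w c (run \<tau> y (n+2) []) \<partial>PiM ({0..n} - fst ` set ([]::history)) F)
      \<le> U w F c ({0..n} - fst ` set ([]::history)) (mh w []) - (\<Sum>j\<in>fst ` set ([]::history). c j)"
      by (rule value_upper) (use F wi vt iT in auto)
    then have "agent_value w n a \<tau> \<le> U w F c {0..n} (w 0)"
      unfolding AV by simp
    then show "agent_value w n a \<tau> \<le> agent_value w n a \<sigma>" using vs by simp
  qed
  have "min (\<integral>t. t - w t \<partial>F 0) B \<le> (\<integral>y. snd (run (sstar w F c n) y (n+2) []) - w (snd (run (sstar w F c n) y (n+2) [])) \<partial>PiM ({0..n} - fst ` set ([]::history)) F)"
  proof (rule princ_lower)
    show "\<And>x. 0 \<le> x \<Longrightarrow> (\<integral>t. max 0 (w t - w x) \<partial>F 0) < c 0 \<Longrightarrow> B \<le> x - w x" using Bh unfolding F0 c_def by simp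
    show "integrable (PiM ({0..n} - fst ` set ([]::history)) F) (\<lambda>y. snd (run (sstar w F c n) y (n+2) []) - w (snd (run (sstar w F c n) y (n+2) [])))"
      using INT(2)[OF F sF wi ii wm v mp mo] unfolding \<sigma>_def by simp
  qed (use F wi mw mg nnF gi in auto)
  then have "min (\<integral>t. t - w t \<partial>F 0) B \<le> principal_value w n a \<sigma>"
    unfolding PV \<sigma>_def by simp
  also have "ereal (principal_value w n a \<sigma>) \<le> VP_cond w n a"
    unfolding VP_cond_def using opt by (rule SUP_upper)
  finally show ?thesis unfolding F0 by simp
qed




definition phi :: "(real \<Rightarrow> real) \<Rightarrow> real measure \<Rightarrow> real \<Rightarrow> real" where
  "phi w M r = (\<integral>t. max 0 (w t - r) \<partial>M)"

lemma phi_int: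
  fixes w :: "real \<Rightarrow> real" and M :: "real measure"
  assumes P: "prob_space M" and wi: "integrable M w"
  shows "integrable M (\<lambda>t. max 0 (w t - r))"
  using wi P by (intro integrable_max finite_measure.integrable_const prob_space.finite_measure Bochner_Integration.integrable_diff) auto

lemma phi_mono:
  assumes P: "prob_space M" and wi: "integrable M w" and rr: "r \<le> r'"
  shows "phi w M r' \<le> phi w M r" "phi w M r \<le> phi w M r' + (r' - r)"
proof -
  interpret prob_space M by (rule P)
  show "phi w M r' \<le> phi w M r" unfolding phi_def
    using rr by (intro integral_mono phi_int[OF P wi]) auto
  have "phi w M r \<le> (\<integral>t. max 0 (w t - r') + (r' - r) \<partial>M)" unfolding phi_def
    using rr phi_int[OF P wi] by (intro integral_mono) auto
  also have "\<dots> = phi w M r' + (r' - r)" unfolding phi_def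
    using phi_int[OF P wi] by (subst Bochner_Integration.integral_add) (auto simp: prob_space)
  finally show "phi w M r \<le> phi w M r' + (r' - r)" .
qed

lemma phi_cont:
  assumes P: "prob_space M" and wi: "integrable M w"
  shows "continuous_on UNIV (phi w M)"
proof -
  have "1-lipschitz_on UNIV (phi w M)"
  proof (intro lipschitz_onI)
    fix x y :: real
    show "dist (phi w M x) (phi w M y) \<le> 1 * dist x y"
    proof (cases "x \<le> y")
      case True then show ?thesis using phi_mono[OF P wi True] by (simp add: dist_real_def)
    next
      case False then have "y \<le> x" by simp
      then show ?thesis using phi_mono[OF P wi, of y x] by (simp add: dist_real_def)
    qed
  qed simp
  then show ?thesis by (rule lipschitz_on_continuous_on)
qed

lemma phi_lower:
  assumes P: "prob_space M" and wi: "integrable M w"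
  shows "(\<integral>t. w t \<partial>M) - r \<le> phi w M r"
proof -
  interpret prob_space M by (rule P)
  have "(\<integral>t. w t \<partial>M) - r = (\<integral>t. w t - r \<partial>M)"
    using wi by (subst Bochner_Integration.integral_diff) (auto simp: prob_space)
  also have "\<dots> \<le> phi w M r" unfolding phi_def
    using wi phi_int[OF P wi] by (intro integral_mono) auto
  finally show ?thesis .
qed

lemma phi_nn:
  assumes P: "prob_space M" and wi: "integrable M w"
  shows "(\<integral>\<^sup>+ y. ennreal (w y - r) \<partial>M) = ennreal (phi w M r)"
proof -
  have "(\<integral>\<^sup>+ y. ennreal (w y - r) \<partial>M) = (\<integral>\<^sup>+ y. ennreal (max 0 (w y - r)) \<partial>M)"
    by (intro nn_integral_cong) (auto simp: max_def ennreal_neg)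
  also have "\<dots> = ennreal (phi w M r)" unfolding phi_def
    by (rule nn_integral_eq_integral[OF phi_int[OF P wi]]) auto
  finally show ?thesis .
qed

lemma r_index_eq:
  assumes P: "prob_space (fst a0)" and wi: "integrable (fst a0) w" and c0: "0 \<le> snd a0"
  shows "r_index w a0 = Inf {ereal r | r. phi w (fst a0) r = snd a0}"
proof -
  have "ennreal (snd a0) = (\<integral>\<^sup>+ y. ennreal (w y - r) \<partial>fst a0) \<longleftrightarrow> phi w (fst a0) r = snd a0" for r
  proof -
    have pn: "0 \<le> phi w (fst a0) r" unfolding phi_def by (intro integral_nonneg_AE) auto
    show ?thesis unfolding phi_nn[OF P wi] using pn c0 by (auto simp: ennreal_inj)
  qed
  then show ?thesis unfolding r_index_def by simp
qed

lemma RI: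
  assumes P: "prob_space (fst a0)" and wi: "integrable (fst a0) w" and c0: "0 \<le> snd a0"
    and lt: "phi w (fst a0) m < snd a0"
  shows "r_index w a0 < ereal m"
proof -
  let ?phi = "phi w (fst a0)"
  define r1 where "r1 = min m ((\<integral>t. w t \<partial>fst a0) - snd a0)"
  have r1m: "r1 \<le> m" unfolding r1_def by simp
  have "snd a0 \<le> (\<integral>t. w t \<partial>fst a0) - r1" unfolding r1_def by simp
  also have "\<dots> \<le> ?phi r1" by (rule phi_lower[OF P wi])
  finally have ge: "snd a0 \<le> ?phi r1" .
  have "\<exists>r. r1 \<le> r \<and> r \<le> m \<and> ?phi r = snd a0"
    by (rule IVT2') (use lt ge r1m continuous_on_subset[OF phi_cont[OF P wi]] in auto)
  then obtain r where r: "r \<le> m" "?phi r = snd a0" by blast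
  then have "r \<noteq> m" using lt by auto
  with r have rm: "r < m" by simp
  have "r_index w a0 \<le> ereal r" unfolding r_index_eq[OF P wi c0] using r by (intro Inf_lower) auto
  also have "\<dots> < ereal m" using rm by simp
  finally show ?thesis .
qed

lemma RI_conv:
  assumes P: "prob_space (fst a0)" and wi: "integrable (fst a0) w" and c0: "0 \<le> snd a0"
    and lt: "r_index w a0 < ereal q"
  shows "\<exists>r<q. phi w (fst a0) r = snd a0"
proof -
  from lt obtain e where "e \<in> {ereal r | r. phi w (fst a0) r = snd a0}" "e < ereal q"
    unfolding r_index_eq[OF P wi c0] Inf_less_iff by blast
  then show ?thesis by auto
qed




lemma integrable_return_borel:
  fixes g :: "real \<Rightarrow> real"
  assumes "g \<in> borel_measurable borel"
  shows "integrable (return borel x) g"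
  unfolding integrable_iff_bounded using assms by (simp add: nn_integral_return)

lemma valid_dirac: "0 \<le> x \<Longrightarrow> valid_project (return borel x, 0)"
proof -
  assume x: "0 \<le> x"
  have "AE y in return borel x. 0 \<le> y" by (subst AE_return) (use x in auto)
  then show ?thesis unfolding valid_project_def fst_conv snd_conv
    by (auto simp: prob_space_return integrable_return_borel)
qed

lemma run0_vals2:
  assumes v: "valid_strategy n \<tau>"
  shows "snd (run \<tau> y k []) = 0 \<or> (\<exists>j\<in>fst ` set (fst (run \<tau> y k [])). j \<le> n \<and> snd (run \<tau> y k []) = y j)"
proof -
  have p: "snd (run \<tau> y k []) \<in> insert 0 (snd ` set (fst (run \<tau> y k [])))" by (rule run_pres[OF v])
  have vv: "\<And>j u. (j,u) \<in> set (fst (run \<tau> y k [])) \<Longrightarrow> j \<le> n \<and> u = y j"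
    using run_vals[OF v] by fastforce
  from p vv show ?thesis by force
qed

lemma V0_upper:
  assumes va: "valid_project a0" and cw: "contract w" and dm: "doubly_monotone w"
  shows "VP_cond w 0 (\<lambda>_. a0) \<le> ereal (\<integral>t. t - w t \<partial>fst a0)"
  unfolding VP_cond_def
proof (rule SUP_least)
  fix \<sigma> assume "\<sigma> \<in> opt_strats w 0 (\<lambda>_. a0)"
  then have at: "admissible 0 (\<lambda>_. a0) \<sigma>" unfolding opt_strats_def by auto
  define a :: "nat \<Rightarrow> project" where "a = (\<lambda>_. a0)"
  have va': "\<forall>i\<le>0. valid_project (a i)" using va unfolding a_def by auto
  define F where "F = Fa 0 a"
  note FF = Fa_facts[OF va' cw dm, folded F_def]
  have F: "\<And>j. prob_space (F j)" and sF: "\<And>j. sets (F j) = sets borel" and nnF: "\<And>j. AE t in F j. 0 \<le> t"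
    and ii: "\<And>j. integrable (F j) (\<lambda>t. t)" and wi: "\<And>j. integrable (F j) w"
    and gi: "\<And>j. integrable (F j) (\<lambda>t. t - w t)" and pz: "prizes 0 a = PiM {0..0} F"
    using FF by auto
  have F0: "F 0 = fst a0" unfolding F_def Fa_def a_def by simp
  have wm: "w \<in> borel_measurable borel" using cw unfolding contract_def by auto
  have mg: "mono_on {0..} (\<lambda>y. y - w y)" using dm unfolding doubly_monotone_def by auto
  have vt: "valid_strategy 0 \<sigma>" and mpt: "(\<lambda>y. snd (run \<sigma> y (0+2) [])) \<in> borel_measurable (PiM {0..0} F)"
    and mot: "(\<lambda>y. fst ` set (fst (run \<sigma> y (0+2) []))) \<in> measurable (PiM {0..0} F) (count_space UNIV)"
    using at unfolding admissible_def presented_def opened_def outcome_def pz[unfolded a_def] a_def by auto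
  have iP: "integrable (PiM {0..0} F) (\<lambda>y. snd (run \<sigma> y (0+2) []) - w (snd (run \<sigma> y (0+2) [])))"
    by (rule INT(2)[OF F sF wi ii wm vt mpt mot])
  have ig: "integrable (PiM {0..0} F) (\<lambda>y. y 0 - w (y 0))"
    by (rule comp_integrable(1)[where f="\<lambda>t. t - w t"]) (use F sF gi in auto)
  have eg: "(\<integral>y. y 0 - w (y 0) \<partial>PiM {0..0} F) = (\<integral>t. t - w t \<partial>F 0)"
    by (rule comp_integrable(2)[where f="\<lambda>t. t - w t"]) (use F sF gi in auto)
  have AE0: "AE y in PiM {0..0} F. 0 \<le> y 0"
    using AE_PiM_nonneg[of F "{0..0}"] F nnF by auto
  have "principal_value w 0 (\<lambda>_. a0) \<sigma> = (\<integral>y. snd (run \<sigma> y (0+2) []) - w (snd (run \<sigma> y (0+2) [])) \<partial>PiM {0..0} F)"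
    unfolding principal_value_def presented_def outcome_def pz[unfolded a_def] by simp
  also have "\<dots> \<le> (\<integral>y. y 0 - w (y 0) \<partial>PiM {0..0} F)"
  proof (rule integral_mono_AE[OF iP ig])
    show "AE y in PiM {0..0} F. snd (run \<sigma> y (0+2) []) - w (snd (run \<sigma> y (0+2) [])) \<le> y 0 - w (y 0)"
      using AE0
    proof eventually_elim
      case (elim y)
      from run0_vals(1)[OF vt, of y "0+2"] show ?case
      proof
        assume "snd (run \<sigma> y (0+2) []) = 0"
        then show ?thesis using mg elim unfolding mono_on_def by (metis atLeast_iff order_refl)
      qed auto
    qed
  qed
  finally show "ereal (principal_value w 0 (\<lambda>_. a0) \<sigma>) \<le> ereal (\<integral>t. t - w t \<partial>fst a0)"
    using eg F0 by simp
qed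




lemma V1_upper:
  assumes va: "valid_project a0" and cw: "contract w" and dm: "doubly_monotone w"
    and x0: "0 \<le> x" and rx: "r_index w a0 < ereal (w x)"
  shows "VP_cond w 1 (\<lambda>i. if i = 0 then a0 else (return borel x, 0)) \<le> ereal (x - w x)"
proof -
  define b :: "nat \<Rightarrow> project" where "b = (\<lambda>i. if i = 0 then a0 else (return borel x, 0))"
  have va': "\<forall>i\<le>1. valid_project (b i)" using va valid_dirac[OF x0] unfolding b_def by auto
  define F where "F = Fa 1 b"
  define c where "c = (\<lambda>i. snd (b i))"
  note FF = Fa_facts[OF va' cw dm, folded F_def]
  have F: "\<And>j. prob_space (F j)" and sF: "\<And>j. sets (F j) = sets borel" and nnF: "\<And>j. AE t in F j. 0 \<le> t"
    and ii: "\<And>j. integrable (F j) (\<lambda>t. t)" and wi: "\<And>j. integrable (F j) w"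
    and gi: "\<And>j. integrable (F j) (\<lambda>t. t - w t)" and pz: "prizes 1 b = PiM {0..1} F"
    using FF by auto
  have F0: "F 0 = fst a0" and F1: "F 1 = return borel x" unfolding F_def Fa_def b_def by auto
  have c0: "c 0 = snd a0" and c1: "c 1 = 0" unfolding c_def b_def by auto
  have wm[measurable]: "w \<in> borel_measurable borel" using cw unfolding contract_def by auto
  have mw: "mono_on {0..} w" and mg: "mono_on {0..} (\<lambda>y. y - w y)" using dm unfolding doubly_monotone_def by auto
  have w0: "0 \<le> w 0" using cw unfolding contract_def by auto
  have Pa0: "prob_space (fst a0)" and ia0: "integrable (fst a0) w" and c0nn: "0 \<le> snd a0"
    using F[of 0] wi[of 0] va unfolding F0 valid_project_def by auto
  let ?M = "PiM {0..1} F"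
  let ?q = "w x"
  interpret PM: prob_space ?M by (intro prob_space_PiM F)
  have AEx: "AE y in ?M. y 1 = x"
  proof (rule AE_PiM_component)
    show "AE t in F 1. t = x" unfolding F1 by (subst AE_return) auto
  qed (use F in auto)
  have AE0: "AE y in ?M. 0 \<le> y 0" by (rule AE_PiM_component) (use F nnF in auto)
  have AV: "agent_value w 1 b \<tau> = (\<integral>y. apay w c (run \<tau> y (1+2) []) \<partial>?M)" for \<tau>
    unfolding agent_value_def presented_def opened_def outcome_def pz apay_def c_def by simp
  have PV: "principal_value w 1 b \<tau> = (\<integral>y. snd (run \<tau> y (1+2) []) - w (snd (run \<tau> y (1+2) [])) \<partial>?M)" for \<tau>
    unfolding principal_value_def presented_def outcome_def pz by simp
  define \<tau>1 :: strategy where "\<tau>1 = (\<lambda>h. if h = [] then Open 1 else Present (snd (hd h)))"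
  have v1: "valid_strategy 1 \<tau>1" unfolding valid_strategy_def \<tau>1_def
    by (auto simp: hd_in_set image_iff)
  have r1: "run \<tau>1 y (1+2) [] = ([(1, y 1)], y 1)" for y
    by (simp add: \<tau>1_def numeral_eq_Suc)
  have y1m: "(\<lambda>y. y 1) \<in> borel_measurable ?M" by (rule comp_meas[OF sF]) auto
  have adm1: "admissible 1 b \<tau>1"
    unfolding admissible_def presented_def opened_def outcome_def pz r1 using v1 y1m by simp
  have iw1: "integrable ?M (\<lambda>y. w (y 1))" by (rule comp_integrable(1)[where f=w]) (use F sF wi in auto)
  have "agent_value w 1 b \<tau>1 = (\<integral>y. w (y 1) \<partial>?M)" unfolding AV r1 apay_def using c1 by simp
  also have "\<dots> = (\<integral>t. w t \<partial>F 1)" by (rule comp_integrable(2)[where f=w]) (use F sF wi in auto)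
  also have "\<dots> = ?q" unfolding F1 by (rule integral_return) auto
  finally have AV1: "agent_value w 1 b \<tau>1 = ?q" .
  obtain r where rq: "r < ?q" and phir: "phi w (fst a0) r = snd a0" using RI_conv[OF Pa0 ia0 c0nn rx] by blast
  have phiq: "phi w (fst a0) ?q \<le> snd a0" using phi_mono(1)[OF Pa0 ia0, of r ?q] rq phir by simp
  show ?thesis
    unfolding VP_cond_def b_def[symmetric]
  proof (rule SUP_least)
    fix \<sigma> assume so: "\<sigma> \<in> opt_strats w 1 b"
    then have at: "admissible 1 b \<sigma>" and best: "agent_value w 1 b \<tau>1 \<le> agent_value w 1 b \<sigma>"
      unfolding opt_strats_def using adm1 by auto
    have vt: "valid_strategy 1 \<sigma>" and mpt: "(\<lambda>y. snd (run \<sigma> y (1+2) [])) \<in> borel_measurable ?M"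
      and mot: "(\<lambda>y. fst ` set (fst (run \<sigma> y (1+2) []))) \<in> measurable ?M (count_space UNIV)"
      using at unfolding admissible_def presented_def opened_def outcome_def pz by auto
    define Pf where "Pf = (\<lambda>y. snd (run \<sigma> y (1+2) []))"
    define Of where "Of = (\<lambda>y. fst ` set (fst (run \<sigma> y (1+2) [])))"
    have iP: "integrable ?M (\<lambda>y. Pf y - w (Pf y))" unfolding Pf_def by (rule INT(2)[OF F sF wi ii wm vt mpt mot])
    have iA: "integrable ?M (\<lambda>y. w (Pf y) - (\<Sum>j\<in>Of y. c j))" unfolding Pf_def Of_def
      using INT(1)[OF F sF wi ii wm vt mpt mot] unfolding apay_def .
    have PO: "Pf y = 0 \<or> (\<exists>j\<in>Of y. j \<le> 1 \<and> Pf y = y j)" for y unfolding Pf_def Of_def by (rule run0_vals2[OF vt])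
    have Osub: "Of y \<subseteq> {0..1}" for y unfolding Of_def by (rule run0_vals(2)[OF vt])
    have AVs: "agent_value w 1 b \<sigma> = (\<integral>y. w (Pf y) - (\<Sum>j\<in>Of y. c j) \<partial>?M)" unfolding AV apay_def Pf_def Of_def ..
    have PVs: "principal_value w 1 b \<sigma> = (\<integral>y. Pf y - w (Pf y) \<partial>?M)" unfolding PV Pf_def ..
    have gx0: "0 - w 0 \<le> x - w x" using mg x0 unfolding mono_on_def by (metis atLeast_iff order_refl)
    have wq0: "w 0 \<le> ?q" using mw x0 unfolding mono_on_def by (metis atLeast_iff order_refl)
    have key: "AE y in ?M. Pf y - w (Pf y) \<le> x - w x"
    proof (cases "phi w (fst a0) ?q = snd a0")
      case True
      have AEt: "AE t in fst a0. w t < ?q"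
      proof -
        let ?h = "\<lambda>t. max 0 (w t - r) - max 0 (w t - ?q)"
        have ih: "integrable (fst a0) ?h" using phi_int[OF Pa0 ia0] by auto
        have hnn: "AE t in fst a0. 0 \<le> ?h t" using rq by (intro AE_I2) auto
        have "integral\<^sup>L (fst a0) ?h = phi w (fst a0) r - phi w (fst a0) ?q"
          unfolding phi_def using phi_int[OF Pa0 ia0] by (subst Bochner_Integration.integral_diff) auto
        also have "\<dots> = 0" using True phir by simp
        finally have "AE t in fst a0. ?h t = 0" using integral_nonneg_eq_0_iff_AE[OF ih hnn] by simp
        then show ?thesis
        proof eventually_elim
          case (elim t)
          show ?case
          proof (rule ccontr)
            assume "\<not> w t < ?q"
            then have "?h t = ?q - r" using rq by (simp add: max_def)
            then show False using elim rq by simp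
          qed
        qed
      qed
      have AEw: "AE y in ?M. w (y 0) < ?q"
      proof (rule AE_PiM_component[where P="\<lambda>t. w t < ?q"])
        show "AE t in F 0. w t < ?q" unfolding F0 by (rule AEt)
      qed (use F in auto)
      show ?thesis using AEx AE0 AEw
      proof eventually_elim
        case (elim y)
        from PO[of y] show ?case
        proof
          assume "Pf y = 0" then show ?thesis using gx0 by simp
        next
          assume "\<exists>j\<in>Of y. j \<le> 1 \<and> Pf y = y j"
          then obtain j where j: "j \<le> 1" "Pf y = y j" by blast
          show ?thesis
          proof (cases "j = 0")
            case True
            have "y 0 \<le> x"
            proof (rule ccontr)
              assume "\<not> y 0 \<le> x"
              then have "?q \<le> w (y 0)" using mw x0 unfolding mono_on_def by auto
              then show False using elim by simp
            qed
            then show ?thesis using mg elim True j x0 unfolding mono_on_def by auto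
          next
            case False
            then have "j = 1" using j by simp
            then show ?thesis using j elim by simp
          qed
        qed
      qed
    next
      case False
      then have phlt: "phi w (fst a0) ?q < snd a0" using phiq by simp
      define ys :: "nat \<Rightarrow> real" where "ys = (\<lambda>i. if i = 1 then x else 0)"
      define e where "e = (0 \<in> Of ys)"
      have Oe: "(0 \<in> Of y) = e" if y1: "y 1 = x" for y
      proof -
        have "(0 \<in> Of y) = (0 \<in> Of (y(0:=0)))" unfolding Of_def by (rule run_mem_indep[OF vt]) auto
        also have "run \<sigma> (y(0:=0)) (1+2) [] = run \<sigma> ys (1+2) []"
          by (rule run_cong[OF vt]) (use y1 in \<open>auto simp: ys_def\<close>)
        then have "Of (y(0:=0)) = Of ys" unfolding Of_def by simp
        finally show ?thesis unfolding e_def by simp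
      qed
      have ne: "\<not> e"
      proof
        assume e
        have bound: "AE y in ?M. w (Pf y) - (\<Sum>j\<in>Of y. c j) \<le> max ?q (w (y 0)) - snd a0"
          using AEx
        proof eventually_elim
          case (elim y)
          have o0: "0 \<in> Of y" using Oe[of y] elim \<open>e\<close> by simp
          have e01: "{0..1::nat} = {0,1}" by auto
          have sub01: "\<And>S::nat set. S \<subseteq> {0,1} \<Longrightarrow> 0 \<in> S \<Longrightarrow> S = {0} \<or> S = {0,1}"
            by blast
          have "Of y = {0} \<or> Of y = {0,1}" by (rule sub01[OF Osub[of y, unfolded e01] o0])
          then have cs: "(\<Sum>j\<in>Of y. c j) = snd a0"
            using c1 by (elim disjE) (simp_all add: c0)
          have "w (Pf y) \<le> max ?q (w (y 0))"
          proof -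
            from PO[of y] show ?thesis
            proof
              assume "Pf y = 0" then show ?thesis using wq0 by simp
            next
              assume "\<exists>j\<in>Of y. j \<le> 1 \<and> Pf y = y j"
              then obtain j where j: "j \<le> 1" "Pf y = y j" by blast
              then have "j = 0 \<or> j = 1" by arith
              then show ?thesis
              proof
                assume "j = 0" then show ?thesis using j(2) by simp
              next
                assume "j = 1" then have "Pf y = x" using j(2) elim by simp
                then show ?thesis by simp
              qed
            qed
          qed
          then show ?case using cs by simp
        qed
        have iw0: "integrable ?M (\<lambda>y. w (y 0))" by (rule comp_integrable(1)[where f=w]) (use F sF wi in auto)
        have imax: "integrable ?M (\<lambda>y. max ?q (w (y 0)) - snd a0)"
          by (intro Bochner_Integration.integrable_diff integrable_max PM.integrable_const iw0)
        have "agent_value w 1 b \<sigma> \<le> (\<integral>y. max ?q (w (y 0)) - snd a0 \<partial>?M)"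
          unfolding AVs by (rule integral_mono_AE[OF iA imax bound])
        also have "\<dots> = (\<integral>y. max ?q (w (y 0)) \<partial>?M) - snd a0"
        proof -
          have i1: "integrable ?M (\<lambda>y. max ?q (w (y 0)))" by (intro integrable_max PM.integrable_const iw0)
          have i2: "integrable ?M (\<lambda>y. snd a0)" by (rule PM.integrable_const)
          have "(\<integral>y. max ?q (w (y 0)) - snd a0 \<partial>?M) = (\<integral>y. max ?q (w (y 0)) \<partial>?M) - (\<integral>y. snd a0 \<partial>?M)"
            by (rule Bochner_Integration.integral_diff[OF i1 i2])
          moreover have "(\<integral>y. snd a0 \<partial>?M) = snd a0" using PM.prob_space by simp
          ultimately show ?thesis by simp
        qed
        also have "(\<integral>y. max ?q (w (y 0)) \<partial>?M) = (\<integral>t. max ?q (w t) \<partial>F 0)"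
          by (rule comp_integrable(2)[where f="\<lambda>t. max ?q (w t)"]) (use F sF wi in \<open>auto intro!: integrable_max finite_measure.integrable_const prob_space.finite_measure\<close>)
        also have "(\<integral>t. max ?q (w t) \<partial>F 0) = (\<integral>t. ?q + max 0 (w t - ?q) \<partial>F 0)"
          by (intro Bochner_Integration.integral_cong) (auto simp: max_def)
        also have "\<dots> = ?q + phi w (fst a0) ?q"
          unfolding phi_def F0 using phi_int[OF Pa0 ia0] Pa0
          by (subst Bochner_Integration.integral_add) (auto simp: prob_space.prob_space intro: finite_measure.integrable_const prob_space.finite_measure)
        finally have "agent_value w 1 b \<sigma> < ?q" using phlt by simp
        then show False using best AV1 by simp
      qed
      show ?thesis using AEx AE0
      proof eventually_elim
        case (elim y)
        have "0 \<notin> Of y" using Oe[of y] elim ne by simp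
        from PO[of y] show ?case
        proof
          assume "Pf y = 0" then show ?thesis using gx0 by simp
        next
          assume "\<exists>j\<in>Of y. j \<le> 1 \<and> Pf y = y j"
          then obtain j where j: "j \<in> Of y" "j \<le> 1" "Pf y = y j" by blast
          have "j \<noteq> 0" using j(1) \<open>0 \<notin> Of y\<close> by (metis)
          then have "j = 1" using j(2) by arith
          then show ?thesis using j elim by simp
        qed
      qed
    qed
    have "principal_value w 1 b \<sigma> \<le> (\<integral>y. x - w x \<partial>?M)"
      unfolding PVs by (rule integral_mono_AE[OF iP PM.integrable_const key])
    moreover have m1: "measure ?M (space ?M) = 1" by (rule PM.prob_space)
    ultimately show "ereal (principal_value w 1 b \<sigma>) \<le> ereal (x - w x)" by simp
  qed
qed




theorem mainTheorem1:
  fixes w :: "real \<Rightarrow> real" and a0 :: project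
  assumes "valid_project a0"
    and "contract w"
    and "doubly_monotone w"
  shows "VP_cond w 0 (\<lambda>_. a0) = VP w a0 \<or>
         (\<forall>\<epsilon>>0. \<exists>x\<ge>0. ereal (w x) > r_index w a0 \<and>
            VP_cond w 1 (\<lambda>i. if i = 0 then a0 else (return borel x, 0)) < VP w a0 + ereal \<epsilon>)"
proof -
  note va = assms(1) and cw = assms(2) and dm = assms(3)
  let ?gz = "\<integral>t. t - w t \<partial>fst a0"
  let ?Vs = "VP_cond w 0 (\<lambda>_. a0)"
  let ?V = "VP w a0"
  let ?Vd = "\<lambda>x. VP_cond w 1 (\<lambda>i. if i = 0 then a0 else (return borel x, 0))"
  let ?S = "{(n::nat, a::nat \<Rightarrow> project). a 0 = a0 \<and> (\<forall>i\<le>n. valid_project (a i))}"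
  have mg: "mono_on {0..} (\<lambda>y. y - w y)" using dm unfolding doubly_monotone_def by auto
  have Pa0: "prob_space (fst a0)" and c0nn: "0 \<le> snd a0" using va unfolding valid_project_def by auto
  have ia0: "integrable (fst a0) w"
    using Fa_facts(5)[of 0 "\<lambda>_. a0" w 0] va cw dm by (simp add: Fa_def)
  have mem0: "(0::nat, \<lambda>_::nat. a0) \<in> ?S" using va by auto
  have VleV0: "?V \<le> ?Vs" unfolding VP_def
    using INF_lower[OF mem0, of "\<lambda>na. VP_cond w (fst na) (snd na)"] by simp
  have LB: "ereal (min ?gz B) \<le> ?V" if HB: "\<And>x. 0 \<le> x \<Longrightarrow> r_index w a0 < ereal (w x) \<Longrightarrow> B \<le> x - w x" for B
    unfolding VP_def
  proof (rule INF_greatest)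
    fix na assume "na \<in> ?S"
    then obtain n a where na: "na = (n, a)" "a 0 = a0" "\<forall>i\<le>n. valid_project (a i)" by auto
    have "ereal (min (\<integral>t. t - w t \<partial>fst (a 0)) B) \<le> VP_cond w n a"
    proof (rule family_lower[OF na(3) cw dm])
      fix x :: real assume x: "0 \<le> x" and lt: "(\<integral>t. max 0 (w t - w x) \<partial>fst (a 0)) < snd (a 0)"
      have "r_index w a0 < ereal (w x)"
        by (rule RI[OF Pa0 ia0 c0nn]) (use lt na(2) in \<open>simp add: phi_def\<close>)
      then show "B \<le> x - w x" using HB x by blast
    qed
    then show "ereal (min ?gz B) \<le> VP_cond w (fst na) (snd na)" using na by simp
  qed
  have V0le: "?Vs \<le> ereal ?gz" by (rule V0_upper[OF va cw dm])
  show ?thesis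
  proof (cases "?Vs = ?V")
    case True then show ?thesis by simp
  next
    case False
    then have Vlt: "?V < ?Vs" using VleV0 by simp
    have Bw: "- w 0 \<le> x - w x" if "0 \<le> x" "r_index w a0 < ereal (w x)" for x
      using mg that unfolding mono_on_def by (metis atLeast_iff order_refl diff_0)
    have Vlow: "ereal (min ?gz (- w 0)) \<le> ?V" by (rule LB[OF Bw])
    have Vup: "?V < ereal ?gz" using Vlt V0le by simp
    obtain v where v: "?V = ereal v" using Vlow Vup by (cases ?V) (auto simp: min_def split: if_splits)
    have vg: "v < ?gz" using Vup v by simp
    show ?thesis
    proof (intro disjI2 allI impI)
      fix \<epsilon> :: real assume e: "\<epsilon> > 0"
      show "\<exists>x\<ge>0. r_index w a0 < ereal (w x) \<and> ?Vd x < ?V + ereal \<epsilon>"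
      proof (rule ccontr)
        assume "\<not> (\<exists>x\<ge>0. r_index w a0 < ereal (w x) \<and> ?Vd x < ?V + ereal \<epsilon>)"
        then have H: "\<And>x. 0 \<le> x \<Longrightarrow> r_index w a0 < ereal (w x) \<Longrightarrow> ?V + ereal \<epsilon> \<le> ?Vd x"
          by (auto simp: not_less)
        have HB: "v + \<epsilon> \<le> x - w x" if "0 \<le> x" "r_index w a0 < ereal (w x)" for x
        proof -
          have "ereal (v + \<epsilon>) = ?V + ereal \<epsilon>" using v by simp
          also have "\<dots> \<le> ?Vd x" by (rule H[OF that])
          also have "\<dots> \<le> ereal (x - w x)" by (rule V1_upper[OF va cw dm that])
          finally show ?thesis by simp
        qed
        have "ereal (min ?gz (v + \<epsilon>)) \<le> ?V" by (rule LB[OF HB])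
        then have "min ?gz (v + \<epsilon>) \<le> v" using v by (simp add: min_def split: if_splits)
        then show False using vg e by linarith
      qed
    qed
  qed
qed


end
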